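(* Let $\mathcal K_\bullet,\mathcal K_\circ\in\mathbb K$ with $\mathcal K_\circ\in\mathrm{refine}(\mathcal K_\bullet)$. Then every $v\in L^2(\Gamma)$ satisfies $$(J_\circ-J_\bullet)v\in\mathrm{span}\big\{\bar R_{\circ,i,p}:\ i\in\{1-p+o,\dots,N_\circ-p-1\},\ \mathrm{supp}(\bar R_{\circ,i,p})\cap\widetilde{\mathcal N}_{\circ\setminus\bullet}\ne\emptyset\big\},$$ where $\widetilde{\mathcal N}_{\circ\setminus\bullet}:=(\mathcal N_\circ\setminus\mathcal N_\bullet)\cup\{z\in\mathcal N_\circ\cap\mathcal N_\bullet:\#_\circ z>\#_\bullet z\}$.
   Context: Geometry: $\Omega\subset\mathbb R^2$ is a bounded simply connected Lipschitz domain with piecewise smooth boundary, $\Gamma\subseteq\partial\Omega$ is connected with Lipschitz relative boundary. Either $\Gamma=\partial\Omega$ (closed case), parametrized by a continuous, piecewise continuously differentiable $\gamma:[a,b]\to\Gamma$ with $\gamma(a)=\gamma(b)$ and $\gamma|_{[a,b)}$ bijective, or $\Gamma\subsetneq\partial\Omega$ (open case), parametrized by a bijective continuous piecewise $C^1$ map $\gamma:[a,b]\to\Gamma$; the one-sided derivatives satisfy $\gamma^{\prime_\ell}(t)\neq0$ for $t\in(a,b]$, $\gamma^{\prime_r}(t)\ne0$ for $t\in[a,b)$, and $\gamma^{\prime_\ell}(t)+c\gamma^{\prime_r}(t)\ne0$ for all $c>0$ (for $t\in[a,b]$ in the closed, $t\in(a,b)$ in the open case). Write $\gamma^{-1}:=(\gamma|_{[a,b)})^{-1}$.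 Set $o=0$ in the closed and $o=1$ in the open case. Fix $p\in\mathbb N$. Knot vectors: a knot vector $\mathcal K_\bullet$ consists of parameter nodes $a=\hat z_0<\dots<\hat z_n=b$ such that $\gamma$ is $C^1$ on each $[\hat z_{j-1},\hat z_j]$, with multiplicities $\#_\bullet\in\{1,\dots,p\}$ at interior nodes and $p+1$ at $\hat z_0,\hat z_n$; the nodes are $\mathcal N_\bullet=\{\gamma(\hat z_j)\}$, multiplicities transfer to them, and $N_\bullet=\sum_{j=1}^n\#_\bullet\hat z_j$. The mesh $\mathcal T_\bullet$ consists of elements $T_j=\gamma([\hat z_{j-1},\hat z_j])$; $\hat\kappa_\bullet=\max\{|\gamma^{-1}(T)|/|\gamma^{-1}(T')|:T,T'\in\mathcal T_\bullet,T\cap T'\ne\emptyset\}$. The parameter knots $(t_{\bullet,i})$ list $\hat z_1,\dots,\hat z_n$ (closed case, $i=1,\dots,N_\bullet$) resp. $\hat z_0,\dots,\hat z_n$ (open case, $i=-p,\dots,N_\bullet$) increasingly, each repeated according to its multiplicity; they are extended to $(t_{\bullet,i})_{i\in\mathbb Z}$, nondecreasing, with $t_{\bullet,-p}=\dots=t_{\bullet,0}=a$, $t_{\bullet,i}\to\pm\infty$, the extension outside $(a,b]$ being the same for all knot vectors. A fixed initial knot vector $\mathcal K_0$ and $\hat\kappa_{\max}\ge1$ are given; $\mathbb K$ is the set of knot vectors with $\hat\kappa_\bullet\le\hat\kappa_{\max}$ obtained from $\mathcal K_0$ by dyadic bisections of elements in the parameter domain and multiplicity increases. $\mathcal K_\circ\in\mathrm{refine}(\mathcal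 K_\bullet)$ means $\mathcal N_\bullet\subseteq\mathcal N_\circ$, $\#_\bullet z\le\#_\circ z$ for $z\in\mathcal N_\bullet$, and every $T\in\mathcal T_\circ$ lies in some $T'\in\mathcal T_\bullet$ with $|\gamma^{-1}(T')|=2^j|\gamma^{-1}(T)|$, $j\in\mathbb N_0$. B-splines: $\hat B_{\bullet,i,0}=\chi_{[t_{\bullet,i-1},t_{\bullet,i})}$, $\hat B_{\bullet,i,q}=\beta_{\bullet,i-1,q}\hat B_{\bullet,i,q-1}+(1-\beta_{\bullet,i,q})\hat B_{\bullet,i+1,q-1}$, $\beta_{\bullet,i,q}(t)=(t-t_{\bullet,i})/(t_{\bullet,i+q}-t_{\bullet,i})$ if $t_{\bullet,i}\neq t_{\bullet,i+q}$, else $0$. Weights/NURBS: given initial weights $w_{0,i}>0$, $i=1-p,\dots,N_0-p$, with $w_{0,1-p}=w_{0,N_0-p}$, let $\hat w=\sum_{k=1-p}^{N_0-p}w_{0,k}\hat B_{0,k,p}|_{[a,b]}$; for $\mathcal K_\bullet\in\mathbb K$ the weights $w_{\bullet,i}$, $i=1-p,\dots,N_\bullet-p$, are the unique coefficients with $\hat w=\sum_k w_{\bullet,k}\hat B_{\bullet,k,p}$ on $[a,b]$. Set $\hat R_{\bullet,i,p}=w_{\bullet,i}\hat B_{\bullet,i,p}/\hat w$, $R_{\bullet,i,p}=\hat R_{\bullet,i,p}\circ\gamma^{-1}$, $\bar R_{\bullet,1-p,p}=R_{\bullet,1-p,p}+R_{\bullet,N_\bullet-p,p}$ and $\bar R_{\bullet,i,p}=R_{\bullet,i,p}$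 for $i\neq1-p$. $\mathcal X_\bullet=\mathrm{span}\{\bar R_{\bullet,i,p}:i=1-p+o,\dots,N_\bullet-p-1\}$. Scott–Zhang operator: for each $\mathcal K_\bullet$ and $i\in\{1-p,\dots,N_\bullet-p\}$ let $\hat B^*_{\bullet,i,p}=\hat B^*(\cdot\,|\,t_{\bullet,i-1},\dots,t_{\bullet,i+p})\in L^2(a,b)$ be dual functions determined by a fixed rule from the knots $t_{\bullet,i-1},\dots,t_{\bullet,i+p}$ only, with support $[t_{\bullet,i-1},t_{\bullet,i+p}]$ and $\int_a^b\hat B^*_{\bullet,i,p}\hat B_{\bullet,j,p}\,dt=\delta_{ij}$. Let $\hat R^*_{\bullet,i,p}=\hat B^*_{\bullet,i,p}\hat w/w_{\bullet,i}$ and $J_\bullet v=\sum_{i=1-p+o}^{N_\bullet-p-1}\alpha_{\bullet,i}(v)\bar R_{\bullet,i,p}$ with $\alpha_{\bullet,1-p}(v)=\int_a^b\frac12(\hat R^*_{\bullet,1-p,p}+\hat R^*_{\bullet,N_\bullet-p,p})\,v\circ\gamma\,dt$ and $\alpha_{\bullet,i}(v)=\int_a^b\hat R^*_{\bullet,i,p}\,v\circ\gamma\,dt$ for $i\neq1-p$. *)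

theory Defs
  imports "HOL-Analysis.Analysis"
begin

type_synonym pt = "real^2"

definition lipschitz_domain :: "pt set \<Rightarrow> bool" where
  "lipschitz_domain \<Omega> \<longleftrightarrow> open \<Omega> \<and>
     (\<forall>x\<in>frontier \<Omega>. \<exists>r>0. \<exists>(Q::pt \<Rightarrow> pt) (L::real) g. orthogonal_transformation Q \<and> L-lipschitz_on UNIV (g :: real \<Rightarrow> real) \<and>
        \<Omega> \<inter> ball x r = {y \<in> ball x r. g ((Q (y - x)) $ 1) < (Q (y - x)) $ 2})"

definition pw_smooth_boundary :: "pt set \<Rightarrow> bool" where
  "pw_smooth_boundary \<Omega> \<longleftrightarrow>
     (\<exists>g. valid_path g \<and> pathfinish g = pathstart g \<and> path_image g = frontier \<Omega>)"

definition C1_on :: "(real \<Rightarrow> pt) \<Rightarrow> real \<Rightarrow> real \<Rightarrow> bool" where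
  "C1_on g c d \<longleftrightarrow> (\<exists>D. continuous_on {c..d} D \<and>
       (\<forall>t\<in>{c..d}. (g has_vector_derivative D t) (at t within {c..d})))"

definition pw_C1 :: "(real \<Rightarrow> pt) \<Rightarrow> real \<Rightarrow> real \<Rightarrow> bool" where
  "pw_C1 g a b \<longleftrightarrow> continuous_on {a..b} g \<and>
     (\<exists>S. finite S \<and> (\<forall>c d. a \<le> c \<and> c < d \<and> d \<le> b \<and> {c<..<d} \<inter> S = {} \<longrightarrow> C1_on g c d))"

definition left_deriv :: "(real \<Rightarrow> pt) \<Rightarrow> real \<Rightarrow> real \<Rightarrow> pt \<Rightarrow> bool" where
  "left_deriv g a t D \<longleftrightarrow> (g has_vector_derivative D) (at t within {a..t})"

definition right_deriv :: "(real \<Rightarrow> pt) \<Rightarrow> real \<Rightarrow> real \<Rightarrow> pt \<Rightarrow> bool" where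
  "right_deriv g b t D \<longleftrightarrow> (g has_vector_derivative D) (at t within {t..b})"

text \<open>The standing geometric setting; cl = True is the case Gamma = boundary of Omega.\<close>
definition geom_setting :: "pt set \<Rightarrow> pt set \<Rightarrow> bool \<Rightarrow> (real \<Rightarrow> pt) \<Rightarrow> real \<Rightarrow> real \<Rightarrow> bool" where
  "geom_setting \<Omega> \<Gamma> cl g a b \<longleftrightarrow>
     open \<Omega> \<and> bounded \<Omega> \<and> connected \<Omega> \<and> simply_connected \<Omega> \<and> lipschitz_domain \<Omega> \<and>
     pw_smooth_boundary \<Omega> \<and>
     a < b \<and> pw_C1 g a b \<and> \<Gamma> = g ` {a..b} \<and> connected \<Gamma> \<and>
     (\<forall>t\<in>{a<..b}. \<exists>D. left_deriv g a t D \<and> D \<noteq> 0) \<and>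
     (\<forall>t\<in>{a..<b}. \<exists>D. right_deriv g b t D \<and> D \<noteq> 0) \<and>
     (\<forall>t\<in>{a<..<b}. \<forall>Dl Dr. left_deriv g a t Dl \<and> right_deriv g b t Dr \<longrightarrow>
          (\<forall>c>0. Dl + c *\<^sub>R Dr \<noteq> 0)) \<and>
     (if cl then
        g a = g b \<and> inj_on g {a..<b} \<and> \<Gamma> = frontier \<Omega> \<and>
        (\<forall>Dl Dr. left_deriv g a b Dl \<and> right_deriv g b a Dr \<longrightarrow> (\<forall>c>0. Dl + c *\<^sub>R Dr \<noteq> 0))
      else inj_on g {a..b} \<and> \<Gamma> \<subset> frontier \<Omega>)"

definition ginv :: "bool \<Rightarrow> (real \<Rightarrow> pt) \<Rightarrow> real \<Rightarrow> real \<Rightarrow> pt \<Rightarrow> real" where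
  "ginv cl g a b = inv_into (if cl then {a..<b} else {a..b}) g"

definition ocase :: "bool \<Rightarrow> int" where
  "ocase cl = (if cl then 0 else 1)"

text \<open>L2(Gamma) with respect to arc length, expressed through the parametrization.\<close>
definition L2_Gamma :: "(real \<Rightarrow> pt) \<Rightarrow> real \<Rightarrow> real \<Rightarrow> (pt \<Rightarrow> real) \<Rightarrow> bool" where
  "L2_Gamma g a b v \<longleftrightarrow> (\<lambda>t. v (g t)) \<in> borel_measurable (lebesgue_on {a..b}) \<and>
     integrable (lebesgue_on {a..b}) (\<lambda>t. (v (g t))\<^sup>2 * norm (vector_derivative g (at t)))"

text \<open>A knot vector is encoded by its multiplicity function on the parameter domain
  (value 0 = not a node).\<close>
type_synonym knotvec = "real \<Rightarrow> nat"

definition nodes_par :: "knotvec \<Rightarrow> real set" where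
  "nodes_par K = {z. 0 < K z}"

definition is_knotvec :: "(real \<Rightarrow> pt) \<Rightarrow> real \<Rightarrow> real \<Rightarrow> nat \<Rightarrow> knotvec \<Rightarrow> bool" where
  "is_knotvec g a b p K \<longleftrightarrow> finite (nodes_par K) \<and> nodes_par K \<subseteq> {a..b} \<and>
     K a = p + 1 \<and> K b = p + 1 \<and> (\<forall>z\<in>{a<..<b}. K z \<le> p) \<and>
     (\<forall>c d. c \<in> nodes_par K \<and> d \<in> nodes_par K \<and> c < d \<and> {c<..<d} \<inter> nodes_par K = {}
         \<longrightarrow> C1_on g c d)"

definition zs :: "knotvec \<Rightarrow> real list" where
  "zs K = sorted_list_of_set (nodes_par K)"

text \<open>Elements in the parameter domain: pairs (z_{j-1}, z_j); T_j = g ` {z_{j-1}..z_j}.\<close>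
definition elems :: "knotvec \<Rightarrow> (real \<times> real) set" where
  "elems K = {(zs K ! (j - 1), zs K ! j) | j. 1 \<le> j \<and> j < length (zs K)}"

text \<open>Local mesh ratio; |gamma^{-1}(T)| for T = g ` {c..d} equals d - c.\<close>
definition kappa :: "(real \<Rightarrow> pt) \<Rightarrow> knotvec \<Rightarrow> real" where
  "kappa g K = Max {(d - c) / (d' - c') | c d c' d'.
      (c, d) \<in> elems K \<and> (c', d') \<in> elems K \<and> g ` {c..d} \<inter> g ` {c'..d'} \<noteq> {}}"

inductive_set reach :: "real \<Rightarrow> real \<Rightarrow> nat \<Rightarrow> knotvec \<Rightarrow> knotvec set"
  for a b :: real and p :: nat and K0 :: knotvec where
  init: "K0 \<in> reach a b p K0"
| bisect: "K \<in> reach a b p K0 \<Longrightarrow> (c, d) \<in> elems K \<Longrightarrow> K((c + d) / 2 := 1) \<in> reach a b p K0"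
| incr: "K \<in> reach a b p K0 \<Longrightarrow> z \<in> {a<..<b} \<Longrightarrow> 0 < K z \<Longrightarrow> K z < p \<Longrightarrow>
         K(z := Suc (K z)) \<in> reach a b p K0"

definition Kset :: "(real \<Rightarrow> pt) \<Rightarrow> real \<Rightarrow> real \<Rightarrow> nat \<Rightarrow> knotvec \<Rightarrow> real \<Rightarrow> knotvec set" where
  "Kset g a b p K0 kmax = {K \<in> reach a b p K0. is_knotvec g a b p K \<and> kappa g K \<le> kmax}"

definition refines :: "(real \<Rightarrow> pt) \<Rightarrow> knotvec \<Rightarrow> knotvec \<Rightarrow> bool" where
  "refines g Kc Kb \<longleftrightarrow> g ` nodes_par Kb \<subseteq> g ` nodes_par Kc \<and>
     (\<forall>z\<in>nodes_par Kb. Kb z \<le> Kc z) \<and>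
     (\<forall>(c, d)\<in>elems Kc. \<exists>(c', d')\<in>elems Kb. g ` {c..d} \<subseteq> g ` {c'..d'} \<and>
         (\<exists>j::nat. d' - c' = 2 ^ j * (d - c)))"

definition Nk :: "real \<Rightarrow> knotvec \<Rightarrow> nat" where
  "Nk a K = (\<Sum>z\<in>nodes_par K - {a}. K z)"

definition knots_list :: "knotvec \<Rightarrow> real list" where
  "knots_list K = concat (map (\<lambda>z. replicate (K z) z) (zs K))"

text \<open>Parameter knots t_i, i \<in> Z: t_{-p}..t_N from the knot vector; fixed extension
  lo (below index -p) and hi (above index N), the same for all knot vectors.\<close>
definition tk :: "real \<Rightarrow> nat \<Rightarrow> (nat \<Rightarrow> real) \<Rightarrow> (nat \<Rightarrow> real) \<Rightarrow> knotvec \<Rightarrow> int \<Rightarrow> real" where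
  "tk a p lo hi K i =
     (if i < - int p then lo (nat (- int p - 1 - i))
      else if i \<le> int (Nk a K) then knots_list K ! nat (i + int p)
      else hi (nat (i - int (Nk a K) - 1)))"

definition beta :: "(int \<Rightarrow> real) \<Rightarrow> int \<Rightarrow> nat \<Rightarrow> real \<Rightarrow> real" where
  "beta t i q x = (if t i \<noteq> t (i + int q) then (x - t i) / (t (i + int q) - t i) else 0)"

fun bspl :: "(int \<Rightarrow> real) \<Rightarrow> int \<Rightarrow> nat \<Rightarrow> real \<Rightarrow> real" where
  "bspl t i 0 x = (if t (i - 1) \<le> x \<and> x < t i then 1 else 0)"
| "bspl t i (Suc q) x = beta t (i - 1) (Suc q) x * bspl t i q x
                        + (1 - beta t i (Suc q) x) * bspl t (i + 1) q x"

definition idx :: "real \<Rightarrow> nat \<Rightarrow> knotvec \<Rightarrow> int set" where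
  "idx a p K = {1 - int p .. int (Nk a K) - int p}"

definition what :: "real \<Rightarrow> real \<Rightarrow> nat \<Rightarrow> (nat \<Rightarrow> real) \<Rightarrow> (nat \<Rightarrow> real) \<Rightarrow> knotvec \<Rightarrow> (int \<Rightarrow> real)
     \<Rightarrow> real \<Rightarrow> real" where
  "what a b p lo hi K0 w0 x =
     (if x \<in> {a..b} then (\<Sum>k\<in>idx a p K0. w0 k * bspl (tk a p lo hi K0) k p x) else 0)"

definition weights :: "real \<Rightarrow> real \<Rightarrow> nat \<Rightarrow> (nat \<Rightarrow> real) \<Rightarrow> (nat \<Rightarrow> real) \<Rightarrow> knotvec \<Rightarrow> (int \<Rightarrow> real)
     \<Rightarrow> knotvec \<Rightarrow> int \<Rightarrow> real" where
  "weights a b p lo hi K0 w0 K = (THE w.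
     (\<forall>x\<in>{a..b}. what a b p lo hi K0 w0 x = (\<Sum>k\<in>idx a p K. w k * bspl (tk a p lo hi K) k p x)) \<and>
     (\<forall>k. k \<notin> idx a p K \<longrightarrow> w k = 0))"

definition Rhat :: "real \<Rightarrow> real \<Rightarrow> nat \<Rightarrow> (nat \<Rightarrow> real) \<Rightarrow> (nat \<Rightarrow> real) \<Rightarrow> knotvec \<Rightarrow> (int \<Rightarrow> real)
     \<Rightarrow> knotvec \<Rightarrow> int \<Rightarrow> real \<Rightarrow> real" where
  "Rhat a b p lo hi K0 w0 K i x =
     weights a b p lo hi K0 w0 K i * bspl (tk a p lo hi K) i p x / what a b p lo hi K0 w0 x"

definition Rfun :: "bool \<Rightarrow> (real \<Rightarrow> pt) \<Rightarrow> real \<Rightarrow> real \<Rightarrow> nat \<Rightarrow> (nat \<Rightarrow> real) \<Rightarrow> (nat \<Rightarrow> real)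
     \<Rightarrow> knotvec \<Rightarrow> (int \<Rightarrow> real) \<Rightarrow> knotvec \<Rightarrow> int \<Rightarrow> pt \<Rightarrow> real" where
  "Rfun cl g a b p lo hi K0 w0 K i y =
     (if y \<in> g ` {a..b} then Rhat a b p lo hi K0 w0 K i (ginv cl g a b y) else 0)"

definition Rbar :: "bool \<Rightarrow> (real \<Rightarrow> pt) \<Rightarrow> real \<Rightarrow> real \<Rightarrow> nat \<Rightarrow> (nat \<Rightarrow> real) \<Rightarrow> (nat \<Rightarrow> real)
     \<Rightarrow> knotvec \<Rightarrow> (int \<Rightarrow> real) \<Rightarrow> knotvec \<Rightarrow> int \<Rightarrow> pt \<Rightarrow> real" where
  "Rbar cl g a b p lo hi K0 w0 K i y =
     (if i = 1 - int p
      then Rfun cl g a b p lo hi K0 w0 K (1 - int p) y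
           + Rfun cl g a b p lo hi K0 w0 K (int (Nk a K) - int p) y
      else Rfun cl g a b p lo hi K0 w0 K i y)"

definition Iset :: "bool \<Rightarrow> real \<Rightarrow> nat \<Rightarrow> knotvec \<Rightarrow> int set" where
  "Iset cl a p K = {1 - int p + ocase cl .. int (Nk a K) - int p - 1}"

text \<open>The knots t_{i-1}, ..., t_{i+p} on which the dual function with index i depends.\<close>
definition window :: "real \<Rightarrow> nat \<Rightarrow> (nat \<Rightarrow> real) \<Rightarrow> (nat \<Rightarrow> real) \<Rightarrow> knotvec \<Rightarrow> int \<Rightarrow> real list" where
  "window a p lo hi K i = map (tk a p lo hi K) [i - 1 .. i + int p]"

definition Rstar :: "real \<Rightarrow> real \<Rightarrow> nat \<Rightarrow> (nat \<Rightarrow> real) \<Rightarrow> (nat \<Rightarrow> real) \<Rightarrow> knotvec \<Rightarrow> (int \<Rightarrow> real)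
     \<Rightarrow> (real list \<Rightarrow> real \<Rightarrow> real) \<Rightarrow> knotvec \<Rightarrow> int \<Rightarrow> real \<Rightarrow> real" where
  "Rstar a b p lo hi K0 w0 Bstar K i x =
     Bstar (window a p lo hi K i) x * what a b p lo hi K0 w0 x / weights a b p lo hi K0 w0 K i"

definition alpha :: "(real \<Rightarrow> pt) \<Rightarrow> real \<Rightarrow> real \<Rightarrow> nat \<Rightarrow> (nat \<Rightarrow> real) \<Rightarrow> (nat \<Rightarrow> real) \<Rightarrow> knotvec
     \<Rightarrow> (int \<Rightarrow> real) \<Rightarrow> (real list \<Rightarrow> real \<Rightarrow> real) \<Rightarrow> knotvec \<Rightarrow> (pt \<Rightarrow> real) \<Rightarrow> int \<Rightarrow> real" where
  "alpha g a b p lo hi K0 w0 Bstar K v i =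
     (if i = 1 - int p
      then (LINT t|lebesgue_on {a..b}. (1 / 2) * (Rstar a b p lo hi K0 w0 Bstar K (1 - int p) t
                 + Rstar a b p lo hi K0 w0 Bstar K (int (Nk a K) - int p) t) * v (g t))
      else (LINT t|lebesgue_on {a..b}. Rstar a b p lo hi K0 w0 Bstar K i t * v (g t)))"

definition Jop :: "bool \<Rightarrow> (real \<Rightarrow> pt) \<Rightarrow> real \<Rightarrow> real \<Rightarrow> nat \<Rightarrow> (nat \<Rightarrow> real) \<Rightarrow> (nat \<Rightarrow> real) \<Rightarrow> knotvec
     \<Rightarrow> (int \<Rightarrow> real) \<Rightarrow> (real list \<Rightarrow> real \<Rightarrow> real) \<Rightarrow> knotvec \<Rightarrow> (pt \<Rightarrow> real) \<Rightarrow> pt \<Rightarrow> real" where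
  "Jop cl g a b p lo hi K0 w0 Bstar K v y =
     (\<Sum>i\<in>Iset cl a p K. alpha g a b p lo hi K0 w0 Bstar K v i * Rbar cl g a b p lo hi K0 w0 K i y)"

definition Npts :: "(real \<Rightarrow> pt) \<Rightarrow> knotvec \<Rightarrow> pt set" where
  "Npts g K = g ` nodes_par K"

definition Ntilde :: "bool \<Rightarrow> (real \<Rightarrow> pt) \<Rightarrow> real \<Rightarrow> real \<Rightarrow> knotvec \<Rightarrow> knotvec \<Rightarrow> pt set" where
  "Ntilde cl g a b Kc Kb = (Npts g Kc - Npts g Kb) \<union>
     {z \<in> Npts g Kc \<inter> Npts g Kb. Kc (ginv cl g a b z) > Kb (ginv cl g a b z)}"

end

theory Submission
  imports Defs
begin


lemma bspl_local:
  "(\<And>j. i - 1 \<le> j \<Longrightarrow> j \<le> i + int q \<Longrightarrow> t j = s j) \<Longrightarrow> bspl t i q x = bspl s i q x"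
proof (induction q arbitrary: i)
  case 0 then show ?case by simp
next
  case (Suc q)
  have h1: "bspl t i q x = bspl s i q x" by (rule Suc.IH) (use Suc.prems in auto)
  have h2: "bspl t (i+1) q x = bspl s (i+1) q x" by (rule Suc.IH) (use Suc.prems in auto)
  have e1: "t (i - 1) = s (i - 1)" "t (i - 1 + int (Suc q)) = s (i - 1 + int (Suc q))"
     "t i = s i" "t (i + int (Suc q)) = s (i + int (Suc q))" using Suc.prems by auto
  show ?case using h1 h2 e1 by (simp add: beta_def)
qed

lemma bspl_shift: "bspl (\<lambda>j. t (j - 1)) (i + 1) q x = bspl t i q x"
proof (induction q arbitrary: i)
  case 0 then show ?case by simp
next
  case (Suc q)
  have "bspl (\<lambda>j. t (j - 1)) (i + 1 + 1) q x = bspl t (i+1) q x" using Suc.IH[of "i+1"] by simp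
  then show ?case using Suc.IH[of i] by (simp add: beta_def algebra_simps)
qed

lemma bspl_supp:
  assumes "mono t" "bspl t i q x \<noteq> 0"
  shows "t (i - 1) \<le> x \<and> x < t (i + int q)"
  using assms(2)
proof (induction q arbitrary: i)
  case 0 then show ?case by (simp split: if_splits)
next
  case (Suc q)
  from Suc.prems have "bspl t i q x \<noteq> 0 \<or> bspl t (i+1) q x \<noteq> 0" by auto
  moreover have "t (i + int q) \<le> t (i + int (Suc q))" "t (i - 1) \<le> t i"
    using assms(1) by (auto intro: monoD)
  ultimately show ?case using Suc.IH[of i] Suc.IH[of "i+1"] by (auto simp: algebra_simps)
qed

lemma bspl_nonneg_bound:
  assumes "mono t"
  shows "0 \<le> bspl t i q x \<and> bspl t i q x \<le> 2 ^ q"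
proof (induction q arbitrary: i)
  case 0 then show ?case by simp
next
  case (Suc q)
  define A where "A = beta t (i - 1) (Suc q) x * bspl t i q x"
  define B where "B = (1 - beta t i (Suc q) x) * bspl t (i + 1) q x"
  have A: "0 \<le> A \<and> A \<le> 2 ^ q"
  proof (cases "bspl t i q x = 0")
    case True then show ?thesis by (simp add: A_def)
  next
    case False
    from bspl_supp[OF assms False] have s: "t (i - 1) \<le> x" "x < t (i + int q)" by auto
    have eq: "i - 1 + int (Suc q) = i + int q" by simp
    have "0 \<le> beta t (i - 1) (Suc q) x" "beta t (i - 1) (Suc q) x \<le> 1"
      using s unfolding beta_def eq by (auto simp: field_simps)
    then show ?thesis unfolding A_def using Suc.IH[of i] mult_right_mono[of "beta t (i - 1) (Suc q) x" 1 "bspl t i q x"]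
      by simp
  qed
  have B: "0 \<le> B \<and> B \<le> 2 ^ q"
  proof (cases "bspl t (i+1) q x = 0")
    case True then show ?thesis by (simp add: B_def)
  next
    case False
    from bspl_supp[OF assms False] have s: "t i \<le> x" "x < t (i + int (Suc q))" by (auto simp: algebra_simps)
    have "0 \<le> 1 - beta t i (Suc q) x" "1 - beta t i (Suc q) x \<le> 1"
      using s unfolding beta_def by (auto simp: field_simps)
    then show ?thesis unfolding B_def using Suc.IH[of "i+1"] mult_right_mono[of "1 - beta t i (Suc q) x" 1 "bspl t (i+1) q x"]
      by simp
  qed
  have "bspl t i (Suc q) x = A + B" by (simp add: A_def B_def)
  then show ?case using A B by simp
qed

lemma bspl_pos:
  assumes "mono t" "t (i - 1) < x" "x < t (i + int q)"
    "\<And>j. i - 1 \<le> j \<Longrightarrow> j \<le> i + int q \<Longrightarrow> x \<noteq> t j"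
  shows "0 < bspl t i q x"
  using assms(2-)
proof (induction q arbitrary: i)
  case 0 then show ?case by simp
next
  case (Suc q)
  define A where "A = beta t (i - 1) (Suc q) x * bspl t i q x"
  define B where "B = (1 - beta t i (Suc q) x) * bspl t (i + 1) q x"
  have nn: "0 \<le> bspl t i q x" "0 \<le> bspl t (i+1) q x" using bspl_nonneg_bound[OF assms(1)] by auto
  have A0: "0 \<le> A"
  proof (cases "bspl t i q x = 0")
    case True then show ?thesis by (simp add: A_def)
  next
    case False
    from bspl_supp[OF assms(1) False] have s: "t (i - 1) \<le> x" "x < t (i + int q)" by auto
    have eq: "i - 1 + int (Suc q) = i + int q" by simp
    have "0 \<le> beta t (i - 1) (Suc q) x"
      using s unfolding beta_def eq by (auto simp: field_simps)
    then show ?thesis unfolding A_def using nn by simp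
  qed
  have B0: "0 \<le> B"
  proof (cases "bspl t (i+1) q x = 0")
    case True then show ?thesis by (simp add: B_def)
  next
    case False
    from bspl_supp[OF assms(1) False] have s: "t i \<le> x" "x < t (i + int (Suc q))" by (auto simp: algebra_simps)
    have "0 \<le> 1 - beta t i (Suc q) x"
      using s unfolding beta_def by (auto simp: field_simps)
    then show ?thesis unfolding B_def using nn by simp
  qed
  have "0 < A \<or> 0 < B"
  proof (cases "x < t (i + int q)")
    case True
    have "0 < bspl t i q x" using Suc.IH[of i] Suc.prems True by auto
    moreover have "0 < beta t (i - 1) (Suc q) x"
      using True Suc.prems(1) unfolding beta_def by (auto simp: field_simps)
    ultimately show ?thesis by (simp add: A_def)
  next
    case False
    then have x1: "t (i + int q) < x" using Suc.prems(3)[of "i + int q"] by force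
    have "t i \<le> t (i + int q)" using assms(1) by (auto intro: monoD)
    with x1 have x2: "t i < x" by simp
    have "0 < bspl t (i+1) q x" using Suc.IH[of "i+1"] Suc.prems x2 by (auto simp: algebra_simps)
    moreover have "0 < 1 - beta t i (Suc q) x"
      using x2 Suc.prems(2) unfolding beta_def by (auto simp: field_simps)
    ultimately show ?thesis by (simp add: B_def)
  qed
  moreover have "bspl t i (Suc q) x = A + B" by (simp add: A_def B_def)
  ultimately show ?case using A0 B0 by linarith
qed

lemma bspl_meas: "bspl t i q \<in> borel_measurable borel"
proof (induction q arbitrary: i)
  case 0
  have "bspl t i 0 = indicator {t (i - 1)..<t i}" by (auto simp: indicator_def fun_eq_iff)
  then show ?case by simp
next
  case (Suc q)
  have b: "(\<lambda>x. beta t j r x) \<in> borel_measurable borel" for j r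
    unfolding beta_def by (cases "t j = t (j + int r)") auto
  show ?case using Suc.IH[of i] Suc.IH[of "i+1"] b
    by (simp add: borel_measurable_add borel_measurable_times)
qed


definition ins :: "(int \<Rightarrow> real) \<Rightarrow> int \<Rightarrow> real \<Rightarrow> int \<Rightarrow> real" where
  "ins t m \<xi> j = (if j < m then t j else if j = m then \<xi> else t (j - 1))"

definition lam :: "(int \<Rightarrow> real) \<Rightarrow> real \<Rightarrow> int \<Rightarrow> nat \<Rightarrow> real" where
  "lam t \<xi> i q = (if t (i + int q - 1) \<le> \<xi> then 1 else if \<xi> \<le> t (i - 1) then 0
      else (\<xi> - t (i - 1)) / (t (i + int q - 1) - t (i - 1)))"

lemma lam_eq: "t (i - 1) \<le> \<xi> \<Longrightarrow> \<xi> < t (i + int q - 1) \<Longrightarrow>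
   lam t \<xi> i q = (\<xi> - t (i - 1)) / (t (i + int q - 1) - t (i - 1))"
  unfolding lam_def by auto

lemma lam_one: "t (i + int q - 1) \<le> \<xi> \<Longrightarrow> lam t \<xi> i q = 1"
  unfolding lam_def by auto

lemma lam_zero: "\<xi> \<le> t (i - 1) \<Longrightarrow> \<xi> < t (i + int q - 1) \<Longrightarrow> lam t \<xi> i q = 0"
  unfolding lam_def by auto

lemma lam_range: "0 \<le> lam t \<xi> i q \<and> lam t \<xi> i q \<le> 1"
  unfolding lam_def by (auto simp: divide_simps)

lemma mono_ins:
  assumes "mono t" "t (m - 1) \<le> \<xi>" "\<xi> < t m"
  shows "mono (ins t m \<xi>)"
proof (rule monoI)
  fix x y :: int assume "x \<le> y"
  have tm: "\<And>u v. u \<le> v \<Longrightarrow> t u \<le> t v" using assms(1) by (auto intro: monoD)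
  show "ins t m \<xi> x \<le> ins t m \<xi> y"
    unfolding ins_def using \<open>x \<le> y\<close> tm[of x "m - 1"] tm[of m "y - 1"] tm[of x y] tm[of "x - 1" "y - 1"] assms
    by auto
qed

lemma beta_eq: "t j \<noteq> t (j + int q) \<Longrightarrow> beta t j q x = (x - t j) / (t (j + int q) - t j)"
  unfolding beta_def by simp

lemma boehm_trivial:
  assumes "mono t" "t (m - 1) \<le> \<xi>" "\<xi> < t m" "m < i \<or> i + int q < m"
  shows "bspl t i q x = lam t \<xi> i q * bspl (ins t m \<xi>) i q x
            + (1 - lam t \<xi> (i + 1) q) * bspl (ins t m \<xi>) (i + 1) q x"
proof -
  have tm: "\<And>u v. u \<le> v \<Longrightarrow> t u \<le> t v" using assms(1) by (auto intro: monoD)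
  show ?thesis
  proof (cases "m < i")
    case True
    have l1: "lam t \<xi> i q = 0"
      using tm[of m "i - 1"] tm[of m "i + int q - 1"] True assms by (intro lam_zero) auto
    have l2: "lam t \<xi> (i + 1) q = 0"
      using tm[of m "i"] tm[of m "i + 1 + int q - 1"] True assms by (intro lam_zero) auto
    have "bspl (ins t m \<xi>) (i + 1) q x = bspl (\<lambda>j. t (j - 1)) (i + 1) q x"
      by (rule bspl_local) (use True in \<open>auto simp: ins_def\<close>)
    also have "\<dots> = bspl t i q x" by (rule bspl_shift)
    finally show ?thesis using l1 l2 by simp
  next
    case False
    with assms have F: "i + int q < m" by auto
    have l1: "lam t \<xi> i q = 1"
      using tm[of "i + int q - 1" "m - 1"] F assms by (intro lam_one) auto
    have l2: "lam t \<xi> (i + 1) q = 1"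
      using tm[of "i + 1 + int q - 1" "m - 1"] F assms by (intro lam_one) auto
    have "bspl (ins t m \<xi>) i q x = bspl t i q x"
      by (rule bspl_local) (use F in \<open>auto simp: ins_def\<close>)
    then show ?thesis using l1 l2 by simp
  qed
qed


lemma boehm:
  assumes mt: "mono t" and m1: "t (m - 1) \<le> \<xi>" and m2: "\<xi> < t m"
  shows "bspl t i q x = lam t \<xi> i q * bspl (ins t m \<xi>) i q x
            + (1 - lam t \<xi> (i + 1) q) * bspl (ins t m \<xi>) (i + 1) q x"
proof (induction q arbitrary: i)
  case 0
  show ?case
  proof (cases "m < i \<or> i + int 0 < m")
    case True then show ?thesis using boehm_trivial[OF assms True] by simp
  next
    case False
    then have im: "i = m" by auto
    have l1: "lam t \<xi> i 0 = 1" using m1 im by (intro lam_one) auto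
    have l2: "lam t \<xi> (i + 1) 0 = 0" using m1 m2 im by (intro lam_zero) auto
    show ?thesis using l1 l2 im m1 m2 by (auto simp: ins_def)
  qed
next
  case (Suc q)
  show ?case
  proof (cases "m < i \<or> i + int (Suc q) < m")
    case True then show ?thesis using boehm_trivial[OF assms True] by simp
  next
    case False
    then have im1: "i \<le> m" and im2: "m \<le> i + int q + 1" by auto
    have tm: "\<And>u v. u \<le> v \<Longrightarrow> t u \<le> t v" using mt by (auto intro: monoD)
    define s where "s = ins t m \<xi>"
    have ms: "mono s" unfolding s_def by (rule mono_ins[OF assms])
    define A where "A = t (i - 1)"
    define B where "B = t i"
    define C where "C = t (i + int q)"
    define D where "D = t (i + int q + 1)"
    have AB: "A \<le> B" "B \<le> C" "C \<le> D" unfolding A_def B_def C_def D_def by (auto intro: tm)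
    have xD: "\<xi> < D" unfolding D_def using tm[of m "i + int q + 1"] im2 m2 by auto
    have Ax: "A \<le> \<xi>" unfolding A_def using tm[of "i - 1" "m - 1"] im1 m1 by auto
    define S0 where "S0 = bspl s i q x"
    define S1 where "S1 = bspl s (i + 1) q x"
    define S2 where "S2 = bspl s (i + 2) q x"
    have IH0: "bspl t i q x = lam t \<xi> i q * S0 + (1 - lam t \<xi> (i + 1) q) * S1"
      using Suc.IH[of i] by (simp add: S0_def S1_def s_def)
    have IH1: "bspl t (i + 1) q x = lam t \<xi> (i + 1) q * S1 + (1 - lam t \<xi> (i + 2) q) * S2"
      using Suc.IH[of "i + 1"] by (simp add: S1_def S2_def s_def add.assoc)
    define bt0 where "bt0 = beta t (i - 1) (Suc q) x"
    define bt1 where "bt1 = beta t i (Suc q) x"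
    define bs0 where "bs0 = beta s (i - 1) (Suc q) x"
    define bs1 where "bs1 = beta s i (Suc q) x"
    define bs2 where "bs2 = beta s (i + 1) (Suc q) x"
    define l0 where "l0 = lam t \<xi> i q"
    define l1 where "l1 = lam t \<xi> (i + 1) q"
    define l2 where "l2 = lam t \<xi> (i + 2) q"
    define L0 where "L0 = lam t \<xi> i (Suc q)"
    define L1 where "L1 = lam t \<xi> (i + 1) (Suc q)"
    have LHS: "bspl t i (Suc q) x = bt0 * bspl t i q x + (1 - bt1) * bspl t (i + 1) q x"
      by (simp add: bt0_def bt1_def)
    have R0: "bspl s i (Suc q) x = bs0 * S0 + (1 - bs1) * S1"
      by (simp add: bs0_def bs1_def S0_def S1_def)
    have R1: "bspl s (i + 1) (Suc q) x = bs1 * S1 + (1 - bs2) * S2"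
      by (simp add: bs1_def bs2_def S1_def S2_def add.assoc)
    define E where "E = t (i + int q - 1)"
    define B1 where "B1 = t (i + 1)"
    have EC: "E \<le> C" "B \<le> B1" "B1 \<le> D" unfolding E_def C_def B_def B1_def D_def by (auto intro: tm)
    have ix: "i - 1 + int (Suc q) = i + int q" "i + int (Suc q) = i + int q + 1"
       "i + 1 + int q - 1 = i + int q" "i + 1 + int (Suc q) - 1 = i + int q + 1"
       "i + 2 + int q - 1 = i + int q + 1" "i + 2 - 1 = i + 1" "i + 1 - 1 = i"
       "i + int (Suc q) - 1 = i + int q" "i + 1 + int (Suc q) = i + int q + 2" by auto
    have bt0e: "bt0 = (if A \<noteq> C then (x - A) / (C - A) else 0)"
      unfolding bt0_def beta_def ix A_def C_def by (simp add: ac_simps)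
    have bt1e: "bt1 = (if B \<noteq> D then (x - B) / (D - B) else 0)"
      unfolding bt1_def beta_def ix B_def D_def by (simp add: ac_simps)
    have sA: "s (i - 1) = A" unfolding s_def ins_def A_def using im1 by simp
    have sD: "s (i + int q + 2) = D" unfolding s_def ins_def D_def using im2 by (simp add: ac_simps)
    have bs0e: "bs0 = (if A \<noteq> s (i + int q) then (x - A) / (s (i + int q) - A) else 0)"
      unfolding bs0_def beta_def ix sA by (simp add: ac_simps)
    have bs1e: "bs1 = (if s i \<noteq> s (i + int q + 1) then (x - s i) / (s (i + int q + 1) - s i) else 0)"
      unfolding bs1_def beta_def ix by (simp add: ac_simps)
    have bs2e: "bs2 = (if s (i + 1) \<noteq> D then (x - s (i + 1)) / (D - s (i + 1)) else 0)"
      unfolding bs2_def beta_def ix sD by (simp add: ac_simps)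
    have l0e: "l0 = (if E \<le> \<xi> then 1 else if \<xi> \<le> A then 0 else (\<xi> - A) / (E - A))"
      unfolding l0_def lam_def E_def A_def by (simp add: ac_simps)
    have l1e: "l1 = (if C \<le> \<xi> then 1 else if \<xi> \<le> B then 0 else (\<xi> - B) / (C - B))"
      unfolding l1_def lam_def ix C_def B_def by (simp add: ac_simps)
    have l2e: "l2 = (if D \<le> \<xi> then 1 else if \<xi> \<le> B1 then 0 else (\<xi> - B1) / (D - B1))"
      unfolding l2_def lam_def ix D_def B1_def by (simp add: ac_simps)
    have L0e: "L0 = (if C \<le> \<xi> then 1 else if \<xi> \<le> A then 0 else (\<xi> - A) / (C - A))"
      unfolding L0_def lam_def ix C_def A_def by (simp add: ac_simps)
    have L1e: "L1 = (if D \<le> \<xi> then 1 else if \<xi> \<le> B then 0 else (\<xi> - B) / (D - B))"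
      unfolding L1_def lam_def ix D_def B_def by (simp add: ac_simps)
    have sup0: "S0 \<noteq> 0 \<Longrightarrow> A \<le> x \<and> x < s (i + int q)"
      using bspl_supp[OF ms, of i q x] sA unfolding S0_def by simp
    have sup1: "S1 \<noteq> 0 \<Longrightarrow> s i \<le> x \<and> x < s (i + int q + 1)"
      using bspl_supp[OF ms, of "i + 1" q x] unfolding S1_def by (simp add: ac_simps)
    have sup2: "S2 \<noteq> 0 \<Longrightarrow> s (i + 1) \<le> x \<and> x < D"
      using bspl_supp[OF ms, of "i + 2" q x] sD unfolding S2_def by (simp add: ac_simps)
    have X1: "bt0 * l0 * S0 = L0 * bs0 * S0"
    proof (cases "S0 = 0")
      case False
      note sp = sup0[OF False]
      consider "m < i + int q" | "m = i + int q" | "m = i + int q + 1" using im2 by linarith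
      then show ?thesis
      proof cases
        case 1
        have v: "s (i + int q) = E" unfolding s_def ins_def E_def using 1 by simp
        have o: "\<xi> < E" unfolding E_def using tm[of m "i + int q - 1"] 1 m2 by simp
        have n: "E - A \<noteq> 0" "C - A \<noteq> 0" using o Ax EC by auto
        have "bt0 * l0 = L0 * bs0" unfolding bt0e bs0e l0e L0e v using o Ax EC n by (auto simp: divide_simps)
        then show ?thesis by simp
      next
        case 2
        have v: "s (i + int q) = \<xi>" unfolding s_def ins_def using 2 by simp
        have o: "E \<le> \<xi>" "\<xi> < C" unfolding E_def C_def using 2 m1 m2 by auto
        have "A < \<xi>" using sp v Ax by auto
        then have n: "\<xi> - A \<noteq> 0" "C - A \<noteq> 0" using o by auto
        have "bt0 * l0 = L0 * bs0" unfolding bt0e bs0e l0e L0e v using o Ax EC n \<open>A < \<xi>\<close> by (auto simp: divide_simps)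
        then show ?thesis by simp
      next
        case 3
        have v: "s (i + int q) = C" unfolding s_def ins_def C_def using 3 by simp
        have o: "C \<le> \<xi>" unfolding C_def using 3 m1 by simp
        show ?thesis unfolding bt0e bs0e l0e L0e v using o EC by (auto simp: divide_simps)
      qed
    qed simp
    have X2: "(bt0 * (1 - l1) + (1 - bt1) * l1) * S1 = (L0 * (1 - bs1) + (1 - L1) * bs1) * S1"
    proof (cases "S1 = 0")
      case False
      note sp = sup1[OF False]
      consider "m = i" | "i < m \<and> m \<le> i + int q" | "m = i + int q + 1" using im1 im2 by linarith
      then show ?thesis
      proof cases
        case 1
        have v: "s i = \<xi>" "s (i + int q + 1) = C" unfolding s_def ins_def C_def using 1 by auto
        have o: "\<xi> < B" unfolding B_def using 1 m2 by simp
        have n: "C - A \<noteq> 0" "C - \<xi> \<noteq> 0" using o Ax AB by auto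
        have e: "l1 = 0" "L1 = 0" "L0 = (\<xi> - A) / (C - A)" "bs1 = (x - \<xi>) / (C - \<xi>)"
            "bt0 = (x - A) / (C - A)"
          unfolding l1e L1e L0e bs1e bt0e v using o Ax AB n by auto
        have "bt0 * (1 - l1) + (1 - bt1) * l1 = L0 * (1 - bs1) + (1 - L1) * bs1"
          unfolding e using n by (simp add: divide_simps; simp add: algebra_simps)
        then show ?thesis by simp
      next
        case 2
        have v: "s i = B" "s (i + int q + 1) = C" unfolding s_def ins_def C_def B_def using 2 by auto
        have o: "B \<le> \<xi>" "\<xi> < C" unfolding B_def C_def using 2 m1 m2 tm[of i "m - 1"] tm[of m "i + int q"] by auto
        have n: "C - A \<noteq> 0" "C - B \<noteq> 0" "D - B \<noteq> 0" using o Ax AB by auto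
        have e: "l1 = (\<xi> - B) / (C - B)" "L1 = (\<xi> - B) / (D - B)" "L0 = (\<xi> - A) / (C - A)"
            "bs1 = (x - B) / (C - B)" "bt0 = (x - A) / (C - A)" "bt1 = (x - B) / (D - B)"
          unfolding l1e L1e L0e bs1e bt0e bt1e v using o Ax AB n by auto
        have "bt0 * (1 - l1) + (1 - bt1) * l1 = L0 * (1 - bs1) + (1 - L1) * bs1"
          unfolding e using n by (simp add: divide_simps; simp add: algebra_simps)
        then show ?thesis by simp
      next
        case 3
        have v: "s i = B" "s (i + int q + 1) = \<xi>" unfolding s_def ins_def B_def using 3 by auto
        have o: "C \<le> \<xi>" "\<xi> < D" unfolding C_def D_def using 3 m1 m2 by auto
        have o2: "B < \<xi>" using sp v by auto
        have n: "\<xi> - B \<noteq> 0" "D - B \<noteq> 0" using o o2 by auto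
        have e: "l1 = 1" "L0 = 1" "L1 = (\<xi> - B) / (D - B)"
            "bs1 = (x - B) / (\<xi> - B)" "bt1 = (x - B) / (D - B)"
          unfolding l1e L1e L0e bs1e bt1e v using o o2 AB n by auto
        have "bt0 * (1 - l1) + (1 - bt1) * l1 = L0 * (1 - bs1) + (1 - L1) * bs1"
          unfolding e using n by (simp add: divide_simps; simp add: algebra_simps)
        then show ?thesis by simp
      qed
    qed simp
    have X3: "(1 - bt1) * (1 - l2) * S2 = (1 - L1) * (1 - bs2) * S2"
    proof (cases "S2 = 0")
      case False
      note sp = sup2[OF False]
      consider "m = i" | "m = i + 1" | "i + 2 \<le> m" using im1 by linarith
      then show ?thesis
      proof cases
        case 1
        have v: "s (i + 1) = B" unfolding s_def ins_def B_def using 1 by auto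
        have o: "\<xi> < B" unfolding B_def using 1 m2 by simp
        have e: "l2 = 0" "L1 = 0" "bs2 = bt1"
          unfolding l2e L1e bs2e bt1e v using o AB EC xD by auto
        show ?thesis unfolding e by simp
      next
        case 2
        have v: "s (i + 1) = \<xi>" unfolding s_def ins_def using 2 by auto
        have o: "B \<le> \<xi>" "\<xi> < B1" unfolding B_def B1_def using 2 m1 m2 by auto
        have n: "D - B \<noteq> 0" "D - \<xi> \<noteq> 0" using o xD AB by auto
        have e: "l2 = 0" "L1 = (\<xi> - B) / (D - B)" "bs2 = (x - \<xi>) / (D - \<xi>)" "bt1 = (x - B) / (D - B)"
          unfolding l2e L1e bs2e bt1e v using o xD AB EC n by auto
        have "(1 - bt1) * (1 - l2) = (1 - L1) * (1 - bs2)"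
          unfolding e using n by (simp add: divide_simps; simp add: algebra_simps)
        then show ?thesis by simp
      next
        case 3
        have v: "s (i + 1) = B1" unfolding s_def ins_def B1_def using 3 by auto
        have o: "B1 \<le> \<xi>" unfolding B1_def using 3 m1 tm[of "i + 1" "m - 1"] by auto
        have n: "D - B \<noteq> 0" "D - B1 \<noteq> 0" using o xD AB EC by auto
        have e: "l2 = (\<xi> - B1) / (D - B1)" "L1 = (\<xi> - B) / (D - B)" "bs2 = (x - B1) / (D - B1)"
            "bt1 = (x - B) / (D - B)"
          unfolding l2e L1e bs2e bt1e v using o xD AB EC n by auto
        have "(1 - bt1) * (1 - l2) = (1 - L1) * (1 - bs2)"
          unfolding e using n by (simp add: divide_simps; simp add: algebra_simps)
        then show ?thesis by simp
      qed
    qed simp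
    have "bspl t i (Suc q) x = bt0 * l0 * S0 + (bt0 * (1 - l1) + (1 - bt1) * l1) * S1
        + (1 - bt1) * (1 - l2) * S2"
      unfolding LHS IH0 IH1 l0_def l1_def l2_def by (simp add: algebra_simps)
    also have "\<dots> = L0 * bs0 * S0 + (L0 * (1 - bs1) + (1 - L1) * bs1) * S1 + (1 - L1) * (1 - bs2) * S2"
      by (simp only: X1 X2 X3)
    also have "\<dots> = L0 * bspl s i (Suc q) x + (1 - L1) * bspl s (i + 1) (Suc q) x"
      unfolding R0 R1 by (simp add: algebra_simps)
    finally show ?thesis by (simp add: L0_def L1_def s_def)
  qed
qed


definition cntl :: "real set \<Rightarrow> (real \<Rightarrow> nat) \<Rightarrow> real \<Rightarrow> nat" where
  "cntl S m z = (\<Sum>z'\<in>{z'\<in>S. z' < z}. m z')"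
definition cnte :: "real set \<Rightarrow> (real \<Rightarrow> nat) \<Rightarrow> real \<Rightarrow> nat" where
  "cnte S m z = (\<Sum>z'\<in>{z'\<in>S. z' \<le> z}. m z')"

lemma cnt_le: "finite S \<Longrightarrow> cntl S m z \<le> cnte S m z"
  unfolding cntl_def cnte_def by (rule sum_mono2) auto

lemma cnte_mono: "finite S \<Longrightarrow> z1 \<le> z2 \<Longrightarrow> cnte S m z1 \<le> cnte S m z2"
  unfolding cnte_def by (rule sum_mono2) auto

lemma cnte_cntl: "finite S \<Longrightarrow> z1 < z2 \<Longrightarrow> cnte S m z1 \<le> cntl S m z2"
  unfolding cntl_def cnte_def by (rule sum_mono2) auto

lemma cnte_eq: "finite S \<Longrightarrow> z \<in> S \<Longrightarrow> cnte S m z = cntl S m z + m z"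
proof -
  assume f: "finite S" and z: "z \<in> S"
  have "{z'\<in>S. z' \<le> z} = insert z {z'\<in>S. z' < z}" using z by auto
  then show ?thesis unfolding cntl_def cnte_def using f by simp
qed

lemma cnt_unique:
  assumes "finite S" "z1 \<in> S" "z2 \<in> S" "cntl S m z1 \<le> n" "n < cnte S m z1"
    "cntl S m z2 \<le> n" "n < cnte S m z2"
  shows "z1 = z2"
proof (rule ccontr)
  assume "z1 \<noteq> z2"
  then consider "z1 < z2" | "z2 < z1" by linarith
  then show False
  proof cases
    case 1 then show False using cnte_cntl[OF assms(1) 1, of m] assms by linarith
  next
    case 2 then show False using cnte_cntl[OF assms(1) 2, of m] assms by linarith
  qed
qed

lemma concat_rep_nth:
  assumes "sorted xs" "distinct xs" "\<forall>z\<in>set xs. 0 < m z"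
    "n < length (concat (map (\<lambda>z. replicate (m z) z) xs))"
  shows "concat (map (\<lambda>z. replicate (m z) z) xs) ! n \<in> set xs \<and>
    cntl (set xs) m (concat (map (\<lambda>z. replicate (m z) z) xs) ! n) \<le> n \<and>
    n < cnte (set xs) m (concat (map (\<lambda>z. replicate (m z) z) xs) ! n)"
  using assms
proof (induction xs arbitrary: n)
  case Nil then show ?case by simp
next
  case (Cons y ys)
  have yl: "\<forall>z\<in>set ys. y < z" using Cons.prems(1,2) by (auto simp: le_less)
  have fin: "finite (set ys)" by simp
  show ?case
  proof (cases "n < m y")
    case True
    have nth: "concat (map (\<lambda>z. replicate (m z) z) (y # ys)) ! n = y"
      using True by (simp add: nth_append)
    have c1: "cntl (set (y # ys)) m y = 0" unfolding cntl_def using yl by (auto intro: sum.neutral)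
    have "{z' \<in> set (y # ys). z' \<le> y} = {y}" using yl by auto
    then have c2: "cnte (set (y # ys)) m y = m y" unfolding cnte_def by simp
    show ?thesis unfolding nth c1 c2 using True by simp
  next
    case False
    define L where "L = concat (map (\<lambda>z. replicate (m z) z) ys)"
    have nth: "concat (map (\<lambda>z. replicate (m z) z) (y # ys)) ! n = L ! (n - m y)"
      using False by (simp add: nth_append L_def)
    have len: "n - m y < length L" using Cons.prems(4) False by (simp add: L_def)
    have IH: "L ! (n - m y) \<in> set ys \<and> cntl (set ys) m (L ! (n - m y)) \<le> n - m y \<and>
        n - m y < cnte (set ys) m (L ! (n - m y))"
      using Cons.IH[of "n - m y"] Cons.prems len unfolding L_def by auto
    define z where "z = L ! (n - m y)"
    have yz: "y < z" using IH yl unfolding z_def by auto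
    have y_ys: "y \<notin> set ys" using Cons.prems(2) by simp
    have e1: "{z' \<in> set (y # ys). z' < z} = insert y {z' \<in> set ys. z' < z}" using yz by auto
    have e2: "{z' \<in> set (y # ys). z' \<le> z} = insert y {z' \<in> set ys. z' \<le> z}" using yz by auto
    have c1: "cntl (set (y # ys)) m z = m y + cntl (set ys) m z"
      unfolding cntl_def e1 using y_ys by simp
    have c2: "cnte (set (y # ys)) m z = m y + cnte (set ys) m z"
      unfolding cnte_def e2 using y_ys by simp
    show ?thesis unfolding nth z_def[symmetric] c1 c2 using IH False unfolding z_def by auto
  qed
qed

lemma length_concat_rep:
  "distinct xs \<Longrightarrow> length (concat (map (\<lambda>z. replicate (m z) z) xs)) = (\<Sum>z\<in>set xs. m z)"
  by (induction xs) auto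

definition kv :: "real \<Rightarrow> real \<Rightarrow> nat \<Rightarrow> knotvec \<Rightarrow> bool" where
  "kv a b p K \<longleftrightarrow> a < b \<and> finite (nodes_par K) \<and> nodes_par K \<subseteq> {a..b} \<and> K a = p + 1 \<and> K b = p + 1
     \<and> (\<forall>z. K z \<le> p + 1)"

definition tot :: "knotvec \<Rightarrow> nat" where
  "tot K = (\<Sum>z\<in>nodes_par K. K z)"

lemma knots_list_char:
  assumes "finite (nodes_par K)" "n < tot K"
  shows "knots_list K ! n \<in> nodes_par K \<and> cntl (nodes_par K) K (knots_list K ! n) \<le> n \<and>
     n < cnte (nodes_par K) K (knots_list K ! n)"
proof -
  have s: "set (zs K) = nodes_par K" "sorted (zs K)" "distinct (zs K)"
    using assms(1) unfolding zs_def by auto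
  have pos: "\<forall>z\<in>set (zs K). 0 < K z" using s unfolding nodes_par_def by auto
  have "length (knots_list K) = tot K" unfolding knots_list_def tot_def
    using length_concat_rep[OF s(3)] s(1) by simp
  then show ?thesis using concat_rep_nth[OF s(2,3) pos, of n] assms(2) s(1)
    unfolding knots_list_def by simp
qed

lemma knots_list_char2:
  assumes "finite (nodes_par K)" "z \<in> nodes_par K" "cntl (nodes_par K) K z \<le> n"
     "n < cnte (nodes_par K) K z"
  shows "n < tot K \<and> knots_list K ! n = z"
proof -
  have "cnte (nodes_par K) K z \<le> tot K" unfolding cnte_def tot_def using assms(1)
    by (rule sum_mono2) auto
  then have n: "n < tot K" using assms by simp
  from knots_list_char[OF assms(1) n] have "knots_list K ! n = z"
    using cnt_unique[OF assms(1) _ assms(2)] assms(3,4) by blast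
  then show ?thesis using n by simp
qed


locale kctx =
  fixes a b :: real and p :: nat and lo hi :: "nat \<Rightarrow> real"
  assumes ab: "a < b" and lo0: "lo 0 \<le> a" and lo_dec: "\<And>k. lo (Suc k) \<le> lo k"
    and hi0: "b \<le> hi 0" and hi_inc: "\<And>k. hi k \<le> hi (Suc k)"
begin

abbreviation T where "T K \<equiv> tk a p lo hi K"
abbreviation NN where "NN K \<equiv> int (Nk a K)"

lemma lo_le: "lo k \<le> a"
proof -
  have "decseq lo" using lo_dec by (rule decseq_SucI)
  then have "lo k \<le> lo 0" by (simp add: decseqD)
  then show ?thesis using lo0 by simp
qed

lemma hi_ge: "b \<le> hi k"
proof -
  have "incseq hi" using hi_inc by (rule incseq_SucI)
  then have "hi 0 \<le> hi k" by (simp add: incseqD)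
  then show ?thesis using hi0 by simp
qed

lemma lo_mono: "k \<le> l \<Longrightarrow> lo l \<le> lo k"
  using decseq_SucI[of lo, OF lo_dec] by (simp add: decseqD)

lemma hi_mono: "k \<le> l \<Longrightarrow> hi k \<le> hi l"
  using incseq_SucI[of hi, OF hi_inc] by (simp add: incseqD)

lemma kv_a: "kv a b p K \<Longrightarrow> a \<in> nodes_par K" unfolding kv_def nodes_par_def by auto
lemma kv_b: "kv a b p K \<Longrightarrow> b \<in> nodes_par K" unfolding kv_def nodes_par_def by auto
lemma kv_fin: "kv a b p K \<Longrightarrow> finite (nodes_par K)" unfolding kv_def by auto
lemma kv_sub: "kv a b p K \<Longrightarrow> z \<in> nodes_par K \<Longrightarrow> a \<le> z \<and> z \<le> b" unfolding kv_def by auto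

lemma kv_tot: "kv a b p K \<Longrightarrow> tot K = Nk a K + p + 1"
proof -
  assume k: "kv a b p K"
  have "tot K = K a + (\<Sum>z\<in>nodes_par K - {a}. K z)"
    unfolding tot_def using kv_a[OF k] kv_fin[OF k] by (simp add: sum.remove)
  then show ?thesis using k unfolding Nk_def kv_def by simp
qed

lemma kv_cntl_a: "kv a b p K \<Longrightarrow> cntl (nodes_par K) K a = 0"
  unfolding cntl_def using kv_sub by (force intro: sum.neutral)

lemma kv_cnte_a: "kv a b p K \<Longrightarrow> cnte (nodes_par K) K a = p + 1"
proof -
  assume k: "kv a b p K"
  have "{z' \<in> nodes_par K. z' \<le> a} = {a}" using kv_sub[OF k] kv_a[OF k] by force
  then show ?thesis unfolding cnte_def using k unfolding kv_def by simp
qed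

lemma kv_cnte_b: "kv a b p K \<Longrightarrow> cnte (nodes_par K) K b = tot K"
proof -
  assume k: "kv a b p K"
  have "{z' \<in> nodes_par K. z' \<le> b} = nodes_par K" using kv_sub[OF k] by force
  then show ?thesis unfolding cnte_def tot_def by simp
qed

lemma kv_cntl_b: "kv a b p K \<Longrightarrow> cntl (nodes_par K) K b = Nk a K"
proof -
  assume k: "kv a b p K"
  have "cnte (nodes_par K) K b = cntl (nodes_par K) K b + K b"
    using cnte_eq[OF kv_fin[OF k] kv_b[OF k]] .
  then show ?thesis using kv_cnte_b[OF k] kv_tot[OF k] k unfolding kv_def by simp
qed

lemma NN_ge: "kv a b p K \<Longrightarrow> int p + 1 \<le> NN K"
proof -
  assume k: "kv a b p K"
  have "K b \<le> Nk a K"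
    unfolding Nk_def using kv_b[OF k] ab kv_fin[OF k]
    by (intro member_le_sum) auto
  then show ?thesis using k unfolding kv_def by simp
qed

lemma tk_mid: "- int p \<le> i \<Longrightarrow> i \<le> NN K \<Longrightarrow> T K i = knots_list K ! nat (i + int p)"
  unfolding tk_def by simp

lemma tk_char:
  assumes k: "kv a b p K" and i: "- int p \<le> i" "i \<le> NN K"
  shows "T K i \<in> nodes_par K \<and> int (cntl (nodes_par K) K (T K i)) \<le> i + int p \<and>
     i + int p < int (cnte (nodes_par K) K (T K i))"
proof -
  have "nat (i + int p) < tot K" using kv_tot[OF k] i by linarith
  from knots_list_char[OF kv_fin[OF k] this] i show ?thesis
    unfolding tk_mid[OF i] by linarith
qed

lemma tk_char2:
  assumes k: "kv a b p K" and z: "z \<in> nodes_par K"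
    and c: "int (cntl (nodes_par K) K z) \<le> i + int p" "i + int p < int (cnte (nodes_par K) K z)"
  shows "- int p \<le> i \<and> i \<le> NN K \<and> T K i = z"
proof -
  have i0: "- int p \<le> i" using c by linarith
  have c': "cntl (nodes_par K) K z \<le> nat (i + int p)" "nat (i + int p) < cnte (nodes_par K) K z"
    using c by linarith+
  from knots_list_char2[OF kv_fin[OF k] z c'] have h: "nat (i + int p) < tot K"
    "knots_list K ! nat (i + int p) = z" by auto
  have i1: "i \<le> NN K" using h(1) kv_tot[OF k] by linarith
  show ?thesis using i0 i1 h(2) tk_mid[OF i0 i1] by simp
qed

lemma tk_a: "kv a b p K \<Longrightarrow> - int p \<le> i \<Longrightarrow> i \<le> 0 \<Longrightarrow> T K i = a"
  using tk_char2[of K a i] kv_a kv_cntl_a kv_cnte_a by simp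

lemma tk_b: "kv a b p K \<Longrightarrow> NN K - int p \<le> i \<Longrightarrow> i \<le> NN K \<Longrightarrow> T K i = b"
  using tk_char2[of K b i] kv_b kv_cntl_b kv_cnte_b kv_tot by simp

lemma tk_in: "kv a b p K \<Longrightarrow> - int p \<le> i \<Longrightarrow> i \<le> NN K \<Longrightarrow> a \<le> T K i \<and> T K i \<le> b"
  using tk_char kv_sub by blast

lemma tk_mono_mid:
  assumes k: "kv a b p K" "- int p \<le> i" "i \<le> j" "j \<le> NN K"
  shows "T K i \<le> T K j"
proof (rule ccontr)
  assume "\<not> T K i \<le> T K j"
  then have lt: "T K j < T K i" by simp
  have ci: "int (cntl (nodes_par K) K (T K i)) \<le> i + int p" using tk_char[OF k(1), of i] k by auto
  have cj: "j + int p < int (cnte (nodes_par K) K (T K j))" using tk_char[OF k(1), of j] k by auto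
  have "cnte (nodes_par K) K (T K j) \<le> cntl (nodes_par K) K (T K i)"
    using cnte_cntl[OF kv_fin[OF k(1)] lt] .
  then show False using ci cj k by linarith
qed

lemma tk_lo: "i < - int p \<Longrightarrow> T K i = lo (nat (- int p - 1 - i))"
  unfolding tk_def by simp
lemma tk_hi: "NN K < i \<Longrightarrow> T K i = hi (nat (i - NN K - 1))"
  unfolding tk_def by simp

lemma tk_mono: assumes k: "kv a b p K" shows "mono (T K)"
proof (rule monoI)
  fix i j :: int assume ij: "i \<le> j"
  consider "i < - int p" | "- int p \<le> i \<and> i \<le> NN K" | "NN K < i" by linarith
  then show "T K i \<le> T K j"
  proof cases
    case 1
    note Ti = tk_lo[OF 1, of K]
    consider "j < - int p" | "- int p \<le> j \<and> j \<le> NN K" | "NN K < j" by linarith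
    then show ?thesis
    proof cases
      case 1
      have "nat (- int p - 1 - j) \<le> nat (- int p - 1 - i)" using ij by (intro nat_mono) linarith
      from lo_mono[OF this] show ?thesis unfolding Ti tk_lo[OF 1] .
    next
      case 2
      have "a \<le> T K j" using tk_in[OF k] 2 by blast
      then show ?thesis unfolding Ti using lo_le order_trans by blast
    next
      case 3
      have "lo (nat (- int p - 1 - i)) \<le> hi (nat (j - NN K - 1))"
        using lo_le hi_ge ab by (meson order_trans less_imp_le)
      then show ?thesis unfolding Ti tk_hi[OF 3] .
    qed
  next
    case 2
    consider "j \<le> NN K" | "NN K < j" by linarith
    then show ?thesis
    proof cases
      case 1 then show ?thesis using tk_mono_mid[OF k _ ij] 2 by blast
    next
      case 3: 2
      have "T K i \<le> b" using tk_in[OF k] 2 by blast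
      then show ?thesis unfolding tk_hi[OF 3] using hi_ge order_trans by blast
    qed
  next
    case 3
    have 4: "NN K < j" using 3 ij by simp
    have "nat (i - NN K - 1) \<le> nat (j - NN K - 1)" using ij by (intro nat_mono) linarith
    from hi_mono[OF this] show ?thesis unfolding tk_hi[OF 3] tk_hi[OF 4] .
  qed
qed

lemma tk_gt_a: assumes k: "kv a b p K" "1 \<le> i" shows "a < T K i"
proof (cases "i \<le> NN K")
  case True
  have c: "T K i \<in> nodes_par K" "i + int p < int (cnte (nodes_par K) K (T K i))"
    using tk_char[OF k(1), of i] True k(2) by simp_all
  have "T K i \<noteq> a"
  proof
    assume "T K i = a"
    then have "i + int p < int (p + 1)" using c(2) kv_cnte_a[OF k(1)] by simp
    then show False using k(2) by simp
  qed
  then show ?thesis using kv_sub[OF k(1) c(1)] by simp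
next
  case False
  then have "T K i = hi (nat (i - NN K - 1))" by (intro tk_hi) simp
  then show ?thesis using hi_ge[of "nat (i - NN K - 1)"] ab by simp
qed

lemma tk_lt_b: assumes k: "kv a b p K" "i \<le> NN K - int p - 1" shows "T K i < b"
proof (cases "- int p \<le> i")
  case True
  have c: "T K i \<in> nodes_par K" "int (cntl (nodes_par K) K (T K i)) \<le> i + int p"
    using tk_char[OF k(1), of i] True k(2) by simp_all
  have "T K i \<noteq> b"
  proof
    assume "T K i = b"
    then have "NN K \<le> i + int p" using c(2) kv_cntl_b[OF k(1)] by simp
    then show False using k(2) by simp
  qed
  then show ?thesis using kv_sub[OF k(1) c(1)] by simp
next
  case False
  then have "T K i = lo (nat (- int p - 1 - i))" by (intro tk_lo) simp
  then show ?thesis using lo_le[of "nat (- int p - 1 - i)"] ab by simp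
qed

lemma tk_strict:
  assumes k: "kv a b p K" and i: "1 - int p \<le> i" "i \<le> NN K - int p"
  shows "T K (i - 1) < T K (i + int p)"
proof (rule ccontr)
  assume "\<not> ?thesis"
  moreover have "T K (i - 1) \<le> T K (i + int p)" by (rule monoD[OF tk_mono[OF k]]) simp
  ultimately have eq: "T K (i - 1) = T K (i + int p)" by simp
  have c1: "int (cntl (nodes_par K) K (T K (i - 1))) \<le> i - 1 + int p" "T K (i - 1) \<in> nodes_par K"
    using tk_char[OF k, of "i - 1"] i by simp_all
  have c2: "i + int p + int p < int (cnte (nodes_par K) K (T K (i + int p)))"
    using tk_char[OF k, of "i + int p"] i by simp
  have "cnte (nodes_par K) K (T K (i - 1)) = cntl (nodes_par K) K (T K (i - 1)) + K (T K (i - 1))"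
    by (rule cnte_eq[OF kv_fin[OF k] c1(2)])
  then have "int (cnte (nodes_par K) K (T K (i - 1))) = int (cntl (nodes_par K) K (T K (i - 1))) + int (K (T K (i - 1)))"
    by simp
  moreover have "K (T K (i - 1)) \<le> p + 1" using k unfolding kv_def by auto
  moreover note c2' = c2[folded eq]
  ultimately show False using c1 by linarith
qed

end


context kctx begin

lemma sum_super:
  assumes "finite F" "nodes_par K \<subseteq> F"
  shows "(\<Sum>z'\<in>{z'\<in>nodes_par K. P z'}. K z') = (\<Sum>z'\<in>{z'\<in>F. P z'}. K z')"
  by (rule sum.mono_neutral_left) (use assms in \<open>auto simp: nodes_par_def\<close>)

lemma insert_knot:
  assumes k: "kv a b p K" and xi: "a < \<xi>" "\<xi> < b" and Kx: "K \<xi> \<le> p"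
    and K1: "K1 = K(\<xi> := Suc (K \<xi>))"
    and m: "m = int (cnte (nodes_par K) K \<xi>) - int p"
  shows "kv a b p K1" "NN K1 = NN K + 1" "T K1 = ins (T K) m \<xi>" "T K (m - 1) \<le> \<xi>" "\<xi> < T K m"
    "1 \<le> m" "m \<le> NN K - int p"
proof -
  have fin: "finite (nodes_par K)" using k by (rule kv_fin)
  define F where "F = insert \<xi> (nodes_par K)"
  have finF: "finite F" unfolding F_def using fin by simp
  have n1: "nodes_par K1 = F" unfolding F_def K1 nodes_par_def by auto
  have K1e: "K1 = (\<lambda>z'. K z' + (if z' = \<xi> then 1 else 0))" unfolding K1 by auto
  have gen: "(\<Sum>z'\<in>{z'\<in>nodes_par K1. P z'}. K1 z') = (\<Sum>z'\<in>{z'\<in>nodes_par K. P z'}. K z') + (if P \<xi> then 1 else 0)"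
    for P
  proof -
    have "(\<Sum>z'\<in>{z'\<in>nodes_par K1. P z'}. K1 z') = (\<Sum>z'\<in>{z'\<in>F. P z'}. K z' + (if z' = \<xi> then 1 else 0))"
      by (simp only: n1) (simp only: K1e)
    also have "\<dots> = (\<Sum>z'\<in>{z'\<in>F. P z'}. K z') + (\<Sum>z'\<in>{z'\<in>F. P z'}. (if z' = \<xi> then 1 else 0))"
      by (rule sum.distrib)
    also have "(\<Sum>z'\<in>{z'\<in>F. P z'}. (if z' = \<xi> then 1 else 0)) = (if P \<xi> then 1 else 0)"
      using finF by (simp add: sum.delta F_def)
    also have "(\<Sum>z'\<in>{z'\<in>F. P z'}. K z') = (\<Sum>z'\<in>{z'\<in>nodes_par K. P z'}. K z')"
      by (rule sum_super[symmetric]) (use finF in \<open>auto simp: F_def\<close>)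
    finally show ?thesis .
  qed
  have cl1: "cntl (nodes_par K1) K1 z = cntl (nodes_par K) K z + (if \<xi> < z then 1 else 0)" for z
    unfolding cntl_def using gen[of "\<lambda>z'. z' < z"] by simp
  have ce1: "cnte (nodes_par K1) K1 z = cnte (nodes_par K) K z + (if \<xi> \<le> z then 1 else 0)" for z
    unfolding cnte_def using gen[of "\<lambda>z'. z' \<le> z"] by simp
  have tot1: "tot K1 = tot K + 1" unfolding tot_def using gen[of "\<lambda>_. True"] by simp
  show k1: "kv a b p K1"
    using k xi Kx finF n1 unfolding kv_def F_def by (auto simp: K1 nodes_par_def)
  show NN1: "NN K1 = NN K + 1" using tot1 kv_tot[OF k] kv_tot[OF k1] by simp
  have cea: "p + 1 \<le> cnte (nodes_par K) K \<xi>"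
    using cnte_mono[OF fin, of a \<xi> K] kv_cnte_a[OF k] xi by simp
  show m1: "1 \<le> m" unfolding m using cea by simp
  have "cnte (nodes_par K) K \<xi> \<le> cntl (nodes_par K) K b" by (rule cnte_cntl[OF fin xi(2)])
  then show m2: "m \<le> NN K - int p" unfolding m using kv_cntl_b[OF k] by simp
  have tm: "\<And>u v. u \<le> v \<Longrightarrow> T K u \<le> T K v" using tk_mono[OF k] by (auto intro: monoD)
  show "T K (m - 1) \<le> \<xi>"
  proof (rule ccontr)
    assume "\<not> T K (m - 1) \<le> \<xi>"
    then have lt: "\<xi> < T K (m - 1)" by simp
    have "int (cntl (nodes_par K) K (T K (m - 1))) \<le> m - 1 + int p"
      using tk_char[OF k, of "m - 1"] m1 m2 by simp
    moreover have "cnte (nodes_par K) K \<xi> \<le> cntl (nodes_par K) K (T K (m - 1))"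
      by (rule cnte_cntl[OF fin lt])
    ultimately show False unfolding m by simp
  qed
  show "\<xi> < T K m"
  proof (rule ccontr)
    assume "\<not> \<xi> < T K m"
    then have le: "T K m \<le> \<xi>" by simp
    have "m + int p < int (cnte (nodes_par K) K (T K m))"
      using tk_char[OF k, of m] m1 m2 by simp
    moreover have "cnte (nodes_par K) K (T K m) \<le> cnte (nodes_par K) K \<xi>"
      by (rule cnte_mono[OF fin le])
    ultimately show False unfolding m by simp
  qed
  show "T K1 = ins (T K) m \<xi>"
  proof
    fix j
    consider "j < - int p" | "- int p \<le> j \<and> j < m" | "j = m" | "m < j \<and> j \<le> NN K + 1" | "NN K + 1 < j"
      by linarith
    then show "T K1 j = ins (T K) m \<xi> j"
    proof cases
      case 1
      then show ?thesis using m1 unfolding ins_def by (simp add: tk_lo)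
    next
      case 2
      define z where "z = T K j"
      have c: "z \<in> nodes_par K" "int (cntl (nodes_par K) K z) \<le> j + int p"
          "j + int p < int (cnte (nodes_par K) K z)"
        using tk_char[OF k, of j] 2 m2 unfolding z_def by simp_all
      have zx: "z \<le> \<xi>"
      proof (rule ccontr)
        assume "\<not> z \<le> \<xi>"
        then have "\<xi> < z" by simp
        from cnte_cntl[OF fin this] have "cnte (nodes_par K) K \<xi> \<le> cntl (nodes_par K) K z" .
        then show False using c(2) 2 unfolding m by simp
      qed
      have z1: "z \<in> nodes_par K1" using c(1) unfolding K1 nodes_par_def by auto
      have "T K1 j = z"
        using tk_char2[OF k1 z1, of j] c(2,3) zx cl1[of z] ce1[of z] by simp
      then show ?thesis using 2 unfolding ins_def z_def by simp
    next
      case 3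
      have z1: "\<xi> \<in> nodes_par K1" unfolding K1 nodes_par_def by auto
      have "cntl (nodes_par K) K \<xi> \<le> cnte (nodes_par K) K \<xi>" by (rule cnt_le[OF fin])
      then have "T K1 j = \<xi>"
        using tk_char2[OF k1 z1, of j] 3 cl1[of \<xi>] ce1[of \<xi>] unfolding m by simp
      then show ?thesis using 3 unfolding ins_def by simp
    next
      case 4
      define z where "z = T K (j - 1)"
      have c: "z \<in> nodes_par K" "int (cntl (nodes_par K) K z) \<le> j - 1 + int p"
          "j - 1 + int p < int (cnte (nodes_par K) K z)"
        using tk_char[OF k, of "j - 1"] 4 m1 unfolding z_def by simp_all
      have zx: "\<xi> < z"
      proof (rule ccontr)
        assume "\<not> \<xi> < z"
        then have "z \<le> \<xi>" by simp
        from cnte_mono[OF fin this] have "cnte (nodes_par K) K z \<le> cnte (nodes_par K) K \<xi>" .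
        then show False using c(3) 4 unfolding m by simp
      qed
      have z1: "z \<in> nodes_par K1" using c(1) unfolding K1 nodes_par_def by auto
      have "T K1 j = z"
        using tk_char2[OF k1 z1, of j] c(2,3) zx cl1[of z] ce1[of z] by simp
      then show ?thesis using 4 unfolding ins_def z_def by simp
    next
      case 5
      have "T K1 j = hi (nat (j - NN K1 - 1))" using 5 NN1 by (intro tk_hi) simp
      moreover have "T K (j - 1) = hi (nat (j - 1 - NN K - 1))" using 5 by (intro tk_hi) simp
      ultimately show ?thesis using 5 m2 NN1 unfolding ins_def by simp
    qed
  qed
qed

end


lemma sum_int_shift: "(\<Sum>j\<in>{l..u::int}. g (j + 1)) = (\<Sum>k\<in>{l + 1..u + 1}. g k)"
proof -
  have "plus 1 ` {l..u} = {l + 1..u + 1}" using image_add_atLeastAtMost[of 1 l u] by simp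
  moreover have "inj_on (plus (1::int)) {l..u}" by (simp add: inj_on_def)
  ultimately have "(\<Sum>k\<in>{l + 1..u + 1}. g k) = (\<Sum>j\<in>{l..u}. g (1 + j))"
    by (metis (no_types, lifting) comp_apply sum.reindex sum.cong)
  then show ?thesis by (simp add: add.commute)
qed

context kctx begin

abbreviation BB where "BB K j x \<equiv> bspl (T K) j p x"

definition expands :: "knotvec \<Rightarrow> knotvec \<Rightarrow> (int \<Rightarrow> real) \<Rightarrow> (int \<Rightarrow> real) \<Rightarrow> bool" where
  "expands K K' f f' \<longleftrightarrow>
     (\<forall>x. (\<Sum>j\<in>idx a p K. f j * BB K j x) = (\<Sum>k\<in>idx a p K'. f' k * BB K' k x)) \<and>
     f' (1 - int p) = f (1 - int p) \<and> f' (NN K' - int p) = f (NN K - int p) \<and>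
     ((\<forall>j\<in>idx a p K. 0 < f j) \<longrightarrow> (\<forall>k\<in>idx a p K'. 0 < f' k))"

lemma expands_trans: "expands K K1 f f1 \<Longrightarrow> expands K1 K2 f1 f2 \<Longrightarrow> expands K K2 f f2"
  unfolding expands_def by auto

lemma expands_refl: "expands K K f f"
  unfolding expands_def by auto

lemma expands_step:
  assumes k: "kv a b p K" and xi: "a < \<xi>" "\<xi> < b" and Kx: "K \<xi> \<le> p"
  shows "\<exists>f1. expands K (K(\<xi> := Suc (K \<xi>))) f f1"
proof -
  define K1 where "K1 = K(\<xi> := Suc (K \<xi>))"
  define m where "m = int (cnte (nodes_par K) K \<xi>) - int p"
  note ik = insert_knot[OF k xi Kx K1_def m_def]
  define t where "t = T K"
  have mt: "mono t" unfolding t_def by (rule tk_mono[OF k])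
  have s: "T K1 = ins t m \<xi>" using ik(3) unfolding t_def .
  have m1: "t (m - 1) \<le> \<xi>" "\<xi> < t m" using ik(4,5) unfolding t_def by auto
  define N where "N = NN K"
  have N1: "NN K1 = N + 1" using ik(2) unfolding N_def .
  have Np: "int p + 1 \<le> N" unfolding N_def by (rule NN_ge[OF k])
  define I where "I = {1 - int p..N - int p}"
  define I1 where "I1 = {1 - int p..N - int p + 1}"
  have idxK: "idx a p K = I" unfolding idx_def I_def N_def ..
  have idxK1: "idx a p K1 = I1" unfolding idx_def I1_def N1 by (simp add: algebra_simps)
  define l where "l = (\<lambda>k. lam t \<xi> k p)"
  define f0 where "f0 = (\<lambda>k. if k \<in> I then f k else 0)"
  define f1 where "f1 = (\<lambda>k. l k * f0 k + (1 - l k) * f0 (k - 1))"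
  have l1: "l (1 - int p) = 1"
  proof -
    have "t (1 - int p + int p - 1) = a" unfolding t_def using tk_a[OF k, of 0] by simp
    then show ?thesis unfolding l_def using xi by (intro lam_one) simp
  qed
  have l2: "l (N - int p + 1) = 0"
  proof -
    have "t (N - int p + 1 - 1) = b" unfolding t_def N_def using tk_b[OF k, of "NN K - int p"] Np N_def by simp
    moreover have "t (N - int p + 1 + int p - 1) = b" unfolding t_def N_def using tk_b[OF k, of "NN K"] by simp
    ultimately show ?thesis unfolding l_def using xi by (intro lam_zero) simp_all
  qed
  have I1a: "I1 = insert (N - int p + 1) I" unfolding I1_def I_def using Np by auto
  have I1b: "I1 = insert (1 - int p) {1 - int p + 1..N - int p + 1}" unfolding I1_def using Np by auto
  have fin: "finite I" unfolding I_def by simp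
  have sumeq: "(\<Sum>j\<in>I. f j * BB K j x) = (\<Sum>k\<in>I1. f1 k * BB K1 k x)" for x
  proof -
    define S where "S = (\<lambda>k. bspl (ins t m \<xi>) k p x)"
    have bo: "BB K j x = l j * S j + (1 - l (j + 1)) * S (j + 1)" for j
      unfolding S_def l_def t_def using boehm[OF mt m1, of j p x] unfolding t_def by simp
    have "(\<Sum>j\<in>I. f j * BB K j x) = (\<Sum>j\<in>I. f0 j * l j * S j) + (\<Sum>j\<in>I. f0 (j + 1 - 1) * (1 - l (j + 1)) * S (j + 1))"
      unfolding bo f0_def by (simp add: sum.distrib[symmetric] algebra_simps)
    also have "(\<Sum>j\<in>I. f0 j * l j * S j) = (\<Sum>k\<in>I1. f0 k * l k * S k)"
      unfolding I1a using fin by (simp add: f0_def I_def)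
    also have "(\<Sum>j\<in>I. f0 (j + 1 - 1) * (1 - l (j + 1)) * S (j + 1)) = (\<Sum>k\<in>{1 - int p + 1..N - int p + 1}. f0 (k - 1) * (1 - l k) * S k)"
      unfolding I_def by (rule sum_int_shift[where g = "\<lambda>k. f0 (k - 1) * (1 - l k) * S k"])
    also have "\<dots> = (\<Sum>k\<in>I1. f0 (k - 1) * (1 - l k) * S k)"
      unfolding I1b by (simp add: f0_def I_def)
    also have "(\<Sum>k\<in>I1. f0 k * l k * S k) + (\<Sum>k\<in>I1. f0 (k - 1) * (1 - l k) * S k) = (\<Sum>k\<in>I1. f1 k * S k)"
      unfolding f1_def by (simp add: sum.distrib[symmetric] algebra_simps)
    finally show ?thesis unfolding S_def s .
  qed
  have e1: "f1 (1 - int p) = f (1 - int p)" unfolding f1_def l1 f0_def I_def using Np by simp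
  have e2: "f1 (NN K1 - int p) = f (NN K - int p)"
  proof -
    have q: "NN K1 - int p = N - int p + 1" using N1 by simp
    have "N - int p \<in> I" "N - int p + 1 - 1 = N - int p" unfolding I_def using Np by auto
    then show ?thesis unfolding q f1_def l2 f0_def N_def[symmetric] by simp
  qed
  have pos: "\<forall>k\<in>I1. 0 < f1 k" if fp: "\<forall>j\<in>I. 0 < f j"
  proof
    fix k assume k: "k \<in> I1"
    consider "k = 1 - int p" | "k = N - int p + 1" | "k \<in> I" "k - 1 \<in> I" using k Np unfolding I1_def I_def by force
    then show "0 < f1 k"
    proof cases
      case 1 then show ?thesis using e1 fp Np unfolding I_def by auto
    next
      case 2
      then have "k = NN K1 - int p" using N1 by simp
      then have "f1 k = f (N - int p)" using e2 N_def by simp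
      moreover have "N - int p \<in> I" unfolding I_def using Np by simp
      ultimately show ?thesis using fp by simp
    next
      case 3
      have r: "0 \<le> l k" "l k \<le> 1" using lam_range unfolding l_def by auto
      have p1: "0 < f0 k" "0 < f0 (k - 1)" unfolding f0_def using 3 fp by auto
      show ?thesis
      proof (cases "l k = 1")
        case True then show ?thesis unfolding f1_def using p1 by simp
      next
        case False
        then have "0 < 1 - l k" using r by simp
        then have "0 < (1 - l k) * f0 (k - 1)" using p1 by simp
        moreover have "0 \<le> l k * f0 k" using r p1 by simp
        ultimately show ?thesis unfolding f1_def by simp
      qed
    qed
  qed
  have "expands K K1 f f1" unfolding expands_def idxK idxK1 using sumeq e1 e2 pos by simp
  then show ?thesis unfolding K1_def by blast
qed

end


context kctx begin

lemma expands_le_aux: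
  assumes k': "kv a b p K'"
  shows "d = (\<Sum>z\<in>nodes_par K'. K' z - K z) \<Longrightarrow> kv a b p K \<Longrightarrow> (\<forall>z. K z \<le> K' z) \<Longrightarrow>
    \<exists>f'. expands K K' f f'"
proof (induction d arbitrary: K f rule: less_induct)
  case (less d)
  have fin': "finite (nodes_par K')" by (rule kv_fin[OF k'])
  show ?case
  proof (cases "\<exists>\<xi>\<in>nodes_par K'. K \<xi> < K' \<xi>")
    case False
    have "K = K'"
    proof
      fix z
      show "K z = K' z"
      proof (cases "z \<in> nodes_par K'")
        case True then show ?thesis using False less.prems(3) by (meson not_less le_antisym)
      next
        case False
        then have "K' z = 0" unfolding nodes_par_def by simp
        then show ?thesis using less.prems(3) by (metis le_zero_eq)
      qed
    qed
    then show ?thesis using expands_refl by blast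
  next
    case True
    then obtain \<xi> where xi: "\<xi> \<in> nodes_par K'" "K \<xi> < K' \<xi>" by blast
    have ab': "a \<le> \<xi>" "\<xi> \<le> b" using kv_sub[OF k' xi(1)] by auto
    have "\<xi> \<noteq> a" using xi(2) less.prems(2) k' unfolding kv_def by auto
    moreover have "\<xi> \<noteq> b" using xi(2) less.prems(2) k' unfolding kv_def by auto
    ultimately have xi2: "a < \<xi>" "\<xi> < b" using ab' by auto
    have Kx: "K \<xi> \<le> p" using xi(2) k' unfolding kv_def by (metis Suc_eq_plus1 less_Suc_eq_le order.strict_trans2)
    define K1 where "K1 = K(\<xi> := Suc (K \<xi>))"
    obtain f1 where f1: "expands K K1 f f1" using expands_step[OF less.prems(2) xi2 Kx] unfolding K1_def by blast
    have k1: "kv a b p K1"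
      using insert_knot(1)[OF less.prems(2) xi2 Kx K1_def refl] .
    have le1: "\<forall>z. K1 z \<le> K' z" using less.prems(3) xi(2) unfolding K1_def by auto
    define d1 where "d1 = (\<Sum>z\<in>nodes_par K'. K' z - K1 z)"
    have "d1 < d" unfolding d1_def less.prems(1)
    proof (rule sum_strict_mono_ex1[OF fin'])
      show "\<forall>z\<in>nodes_par K'. K' z - K1 z \<le> K' z - K z" unfolding K1_def by auto
      show "\<exists>z\<in>nodes_par K'. K' z - K1 z < K' z - K z" using xi unfolding K1_def by auto
    qed
    from less.IH[OF this d1_def k1 le1] obtain f' where "expands K1 K' f1 f'" by blast
    then show ?thesis using expands_trans f1 by blast
  qed
qed

lemma expands_le:
  "kv a b p K \<Longrightarrow> kv a b p K' \<Longrightarrow> (\<forall>z. K z \<le> K' z) \<Longrightarrow> \<exists>f'. expands K K' f f'"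
  using expands_le_aux by blast

end


lemma abs_le_sq1: "\<bar>x::real\<bar> \<le> 1 + x\<^sup>2"
proof (cases "\<bar>x\<bar> \<le> 1")
  case True then show ?thesis by (smt (verit) zero_le_power2)
next
  case False
  then have "\<bar>x\<bar> * 1 \<le> \<bar>x\<bar> * \<bar>x\<bar>" by (intro mult_left_mono) auto
  then show ?thesis by (simp add: power2_eq_square abs_mult_self_eq)
qed

lemma meas_leb: "(g::real\<Rightarrow>real) \<in> borel_measurable borel \<Longrightarrow> g \<in> borel_measurable (lebesgue_on S)"
  by (simp add: measurable_completion measurable_lborel1 measurable_restrict_space1)

lemma int_prod:
  fixes F G :: "real \<Rightarrow> real"
  assumes F: "F \<in> borel_measurable (lebesgue_on {a..b})" "integrable (lebesgue_on {a..b}) (\<lambda>t. (F t)\<^sup>2)"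
    and G: "G \<in> borel_measurable borel" "\<And>t. \<bar>G t\<bar> \<le> C"
  shows "integrable (lebesgue_on {a..b}) (\<lambda>t. F t * G t)"
proof (rule Bochner_Integration.integrable_bound)
  show "integrable (lebesgue_on {a..b}) (\<lambda>t. C * (1 + (F t)\<^sup>2))"
    using F(2) by (intro integrable_mult_right integrable_add) auto
  show "(\<lambda>t. F t * G t) \<in> borel_measurable (lebesgue_on {a..b})"
    using F(1) meas_leb[OF G(1)] by (rule borel_measurable_times)
  have C0: "0 \<le> C" using G(2)[of 0] by simp
  show "AE x in lebesgue_on {a..b}. norm (F x * G x) \<le> norm (C * (1 + (F x)\<^sup>2))"
  proof (rule AE_I2)
    fix x
    have "norm (F x * G x) = \<bar>F x\<bar> * \<bar>G x\<bar>" by (simp add: abs_mult)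
    also have "\<dots> \<le> (1 + (F x)\<^sup>2) * C" using abs_le_sq1[of "F x"] G(2)[of x] C0
      by (intro mult_mono) auto
    also have "\<dots> = norm (C * (1 + (F x)\<^sup>2))" using C0 by (simp add: abs_mult)
    finally show "norm (F x * G x) \<le> norm (C * (1 + (F x)\<^sup>2))" .
  qed
qed

lemma dual_sum:
  fixes F :: "real \<Rightarrow> real" and G :: "int \<Rightarrow> real \<Rightarrow> real"
  assumes F: "F \<in> borel_measurable (lebesgue_on {a..b})" "integrable (lebesgue_on {a..b}) (\<lambda>t. (F t)\<^sup>2)"
    and G: "\<And>j. G j \<in> borel_measurable borel" "\<And>j t. \<bar>G j t\<bar> \<le> C"
    and d: "\<forall>j\<in>I. (LINT t|lebesgue_on {a..b}. F t * G j t) = (if i = j then 1 else 0)"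
    and I: "finite I" "i \<in> I"
  shows "(LINT t|lebesgue_on {a..b}. F t * (\<Sum>j\<in>I. f j * G j t)) = f i"
proof -
  have ii: "integrable (lebesgue_on {a..b}) (\<lambda>t. f j * (F t * G j t))" for j
    using int_prod[OF F G] by (intro integrable_mult_right) auto
  have "(LINT t|lebesgue_on {a..b}. F t * (\<Sum>j\<in>I. f j * G j t)) =
      (LINT t|lebesgue_on {a..b}. (\<Sum>j\<in>I. f j * (F t * G j t)))"
    by (simp add: sum_distrib_left algebra_simps)
  also have "\<dots> = (\<Sum>j\<in>I. (LINT t|lebesgue_on {a..b}. f j * (F t * G j t)))"
    by (rule Bochner_Integration.integral_sum[where f = "\<lambda>j t. f j * (F t * G j t)"]) (rule ii)
  also have "\<dots> = (\<Sum>j\<in>I. f j * (if i = j then 1 else 0))"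
    using d by (intro sum.cong) auto
  also have "\<dots> = (\<Sum>j\<in>I. if i = j then f j else 0)" by (intro sum.cong) auto
  also have "\<dots> = f i" using I by simp
  finally show ?thesis .
qed

context kctx begin

lemma BB_meas: "(\<lambda>x. BB K j x) \<in> borel_measurable borel"
  using bspl_meas[of "T K" j p] by simp

lemma BB_bound: "kv a b p K \<Longrightarrow> \<bar>BB K j x\<bar> \<le> 2 ^ p"
  using bspl_nonneg_bound[OF tk_mono] by fastforce

lemma BB_nonneg: "kv a b p K \<Longrightarrow> 0 \<le> BB K j x"
  using bspl_nonneg_bound[OF tk_mono] by fastforce

end


lemma closure_Ioo_minus_finite:
  fixes c d :: real
  assumes "c < d" "finite F"
  shows "{c..d} \<subseteq> closure ({c<..<d} - F)"
proof
  fix x assume x: "x \<in> {c..d}"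
  show "x \<in> closure ({c<..<d} - F)"
    unfolding closure_approachable
  proof (intro allI impI)
    fix e :: real assume e: "0 < e"
    define l where "l = max c (x - e)"
    define u where "u = min d (x + e)"
    have lu: "l < u" using x e assms(1) unfolding l_def u_def by auto
    have "infinite {l<..<u}" using lu by simp
    then have "infinite ({l<..<u} - F)" using assms(2) by (simp add: Diff_infinite_finite)
    then obtain y where y: "y \<in> {l<..<u} - F" by (metis finite.emptyI ex_in_conv)
    have "y \<in> {c<..<d} - F" using y unfolding l_def u_def by auto
    moreover have "dist y x < e" using y unfolding l_def u_def dist_real_def by auto
    ultimately show "\<exists>y\<in>{c<..<d} - F. dist y x < e" by blast
  qed
qed

lemma supp_gen:
  fixes g :: "real \<Rightarrow> 'a::metric_space"
  assumes g: "continuous_on {a..b} g" and cd: "a \<le> c" "c < d" "d \<le> b" and F: "finite F"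
    and h: "\<And>x. c < x \<Longrightarrow> x < d \<Longrightarrow> x \<notin> F \<Longrightarrow> g x \<in> A"
  shows "g ` {c..d} \<subseteq> closure A"
proof -
  define S where "S = {c<..<d} - F"
  have "closure S \<subseteq> {c..d}"
    unfolding S_def by (rule closure_minimal) auto
  then have c1: "continuous_on (closure S) g"
    using cd by (intro continuous_on_subset[OF g]) auto
  have c2: "g ` S \<subseteq> closure A" using h closure_subset unfolding S_def by fastforce
  have "g ` closure S \<subseteq> closure A" by (rule image_closure_subset[OF c1 closed_closure c2])
  moreover have "{c..d} \<subseteq> closure S" unfolding S_def by (rule closure_Ioo_minus_finite[OF cd(2) F])
  ultimately show ?thesis by blast
qed

context kctx begin

lemma window_corr:
  assumes k: "kv a b p K" and k': "kv a b p K'" and le: "\<forall>z. K z \<le> K' z"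
    and kk: "k \<in> idx a p K'"
    and eq: "\<And>z. T K' (k - 1) \<le> z \<Longrightarrow> z \<le> T K' (k + int p) \<Longrightarrow> K z = K' z"
  shows "\<exists>k'\<in>idx a p K. (\<forall>j. k - 1 \<le> j \<longrightarrow> j \<le> k + int p \<longrightarrow> T K' j = T K (j - k + k')) \<and>
      (k' = 1 - int p \<longleftrightarrow> k = 1 - int p) \<and> (k' = NN K - int p \<longleftrightarrow> k = NN K' - int p)"
proof -
  have kr: "1 - int p \<le> k" "k \<le> NN K' - int p" using kk unfolding idx_def by auto
  have fin': "finite (nodes_par K')" by (rule kv_fin[OF k'])
  have sub: "nodes_par K \<subseteq> nodes_par K'" using le unfolding nodes_par_def by (auto intro: less_le_trans)
  define z0 where "z0 = T K' (k - 1)"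
  define z1 where "z1 = T K' (k + int p)"
  define \<delta> where "\<delta> = int (cntl (nodes_par K') K' z0) - int (cntl (nodes_par K) K z0)"
  have dsum: "int (cntl (nodes_par K') K' z) - int (cntl (nodes_par K) K z) = \<delta> \<and>
      int (cnte (nodes_par K') K' z) - int (cnte (nodes_par K) K z) = \<delta>"
    if z: "z0 \<le> z" "z \<le> z1" for z
  proof -
    have gen: "int (\<Sum>z'\<in>{z'\<in>nodes_par K'. P z'}. K' z') - int (\<Sum>z'\<in>{z'\<in>nodes_par K. P z'}. K z')
        = (\<Sum>z'\<in>{z'\<in>nodes_par K'. P z'}. int (K' z') - int (K z'))" for P
    proof -
      have "(\<Sum>z'\<in>{z'\<in>nodes_par K. P z'}. K z') = (\<Sum>z'\<in>{z'\<in>nodes_par K'. P z'}. K z')"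
        by (rule sum_super[OF fin' sub])
      then show ?thesis by (simp add: sum_subtractf)
    qed
    have split: "(\<Sum>z'\<in>{z'\<in>nodes_par K'. P z'}. int (K' z') - int (K z')) =
        (\<Sum>z'\<in>{z'\<in>nodes_par K'. z' < z0}. int (K' z') - int (K z'))"
      if P: "\<And>z'. z' < z0 \<Longrightarrow> P z'" "\<And>z'. P z' \<Longrightarrow> z' \<le> z" for P
    proof (rule sum.mono_neutral_right)
      show "finite {z' \<in> nodes_par K'. P z'}" using fin' by simp
      show "{z' \<in> nodes_par K'. z' < z0} \<subseteq> {z' \<in> nodes_par K'. P z'}" using P by auto
      show "\<forall>i\<in>{z' \<in> nodes_par K'. P z'} - {z' \<in> nodes_par K'. z' < z0}. int (K' i) - int (K i) = 0"
      proof
        fix i assume i: "i \<in> {z' \<in> nodes_par K'. P z'} - {z' \<in> nodes_par K'. z' < z0}"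
        then have "z0 \<le> i" "i \<le> z1" using P(2) z by force+
        then show "int (K' i) - int (K i) = 0" using eq unfolding z0_def z1_def by simp
      qed
    qed
    have d0: "\<delta> = (\<Sum>z'\<in>{z'\<in>nodes_par K'. z' < z0}. int (K' z') - int (K z'))"
      unfolding \<delta>_def cntl_def using gen[of "\<lambda>z'. z' < z0"] by simp
    show ?thesis
      unfolding cntl_def cnte_def gen d0
      using split[of "\<lambda>z'. z' < z"] split[of "\<lambda>z'. z' \<le> z"] z by force
  qed
  define k' where "k' = k - \<delta>"
  have tm': "\<And>u v. u \<le> v \<Longrightarrow> T K' u \<le> T K' v" using tk_mono[OF k'] by (auto intro: monoD)
  have corr: "- int p \<le> j - \<delta> \<and> j - \<delta> \<le> NN K \<and> T K (j - \<delta>) = T K' j"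
    if j: "k - 1 \<le> j" "j \<le> k + int p" for j
  proof -
    define z where "z = T K' j"
    have c: "z \<in> nodes_par K'" "int (cntl (nodes_par K') K' z) \<le> j + int p"
      "j + int p < int (cnte (nodes_par K') K' z)"
      using tk_char[OF k', of j] j kr unfolding z_def by simp_all
    have zz: "z0 \<le> z" "z \<le> z1" unfolding z0_def z1_def z_def using j by (auto intro: tm')
    have Kz: "K z = K' z" using eq zz unfolding z0_def z1_def by simp
    have zn: "z \<in> nodes_par K" using c(1) Kz unfolding nodes_par_def by simp
    from dsum[OF zz] c(2,3) have "int (cntl (nodes_par K) K z) \<le> (j - \<delta>) + int p"
      "(j - \<delta>) + int p < int (cnte (nodes_par K) K z)" by linarith+
    from tk_char2[OF k zn this] show ?thesis unfolding z_def by simp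
  qed
  have k'i: "k' \<in> idx a p K"
    using corr[of "k - 1"] corr[of "k + int p"] unfolding idx_def k'_def by simp
  have win: "\<forall>j. k - 1 \<le> j \<longrightarrow> j \<le> k + int p \<longrightarrow> T K' j = T K (j - k + k')"
    using corr unfolding k'_def by (simp add: algebra_simps)
  have w: "T K' j = T K (j - k + k')" if "k - 1 \<le> j" "j \<le> k + int p" for j
    using win that by blast
  have k'r: "1 - int p \<le> k'" "k' \<le> NN K - int p" using k'i unfolding idx_def by auto
  have e1: "k' = 1 - int p \<longleftrightarrow> k = 1 - int p"
  proof
    assume h: "k' = 1 - int p"
    have "T K' (k + int p - 1) = T K 0" using w[of "k + int p - 1"] h by simp
    also have "\<dots> = a" using tk_a[OF k, of 0] by simp
    finally have "\<not> 1 \<le> k + int p - 1" using tk_gt_a[OF k', of "k + int p - 1"] by auto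
    then show "k = 1 - int p" using kr by simp
  next
    assume h: "k = 1 - int p"
    have "T K (k' + int p - 1) = T K' 0" using w[of 0] h by (simp add: algebra_simps)
    also have "\<dots> = a" using tk_a[OF k', of 0] by simp
    finally have "\<not> 1 \<le> k' + int p - 1" using tk_gt_a[OF k, of "k' + int p - 1"] by auto
    then show "k' = 1 - int p" using k'r by simp
  qed
  have e2: "k' = NN K - int p \<longleftrightarrow> k = NN K' - int p"
  proof
    assume h: "k' = NN K - int p"
    have "T K' k = T K k'" using w[of k] by simp
    also have "\<dots> = b" using tk_b[OF k, of k'] h by simp
    finally have "\<not> k \<le> NN K' - int p - 1" using tk_lt_b[OF k', of k] by auto
    then show "k = NN K' - int p" using kr by simp
  next
    assume h: "k = NN K' - int p"
    have "T K k' = T K' k" using w[of k] by simp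
    also have "\<dots> = b" using tk_b[OF k', of k] h by simp
    finally have "\<not> k' \<le> NN K - int p - 1" using tk_lt_b[OF k, of k'] by auto
    then show "k' = NN K - int p" using k'r by simp
  qed
  show ?thesis using k'i win e1 e2 by blast
qed

end


lemma mid_not_node:
  assumes "(c, d) \<in> elems K"
  shows "K ((c + d) / 2) = 0"
proof -
  from assms obtain j where j: "1 \<le> j" "j < length (zs K)" "c = zs K ! (j - 1)" "d = zs K ! j"
    unfolding elems_def by auto
  have fin: "finite (nodes_par K)"
  proof (rule ccontr)
    assume "infinite (nodes_par K)"
    then have "zs K = []" unfolding zs_def by simp
    then show False using j by simp
  qed
  have st: "sorted (zs K)" "distinct (zs K)" "set (zs K) = nodes_par K" using fin unfolding zs_def by auto
  have cd: "c < d"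
  proof -
    have "c \<le> d" using sorted_nth_mono[OF st(1), of "j - 1" j] j by simp
    moreover have "c \<noteq> d" using j st(2) by (simp add: nth_eq_iff_index_eq)
    ultimately show ?thesis by simp
  qed
  show ?thesis
  proof (rule ccontr)
    assume "K ((c + d) / 2) \<noteq> 0"
    then have "(c + d) / 2 \<in> set (zs K)" using st(3) unfolding nodes_par_def by simp
    then obtain i where i: "i < length (zs K)" "zs K ! i = (c + d) / 2" by (auto simp: in_set_conv_nth)
    have "\<not> i \<le> j - 1"
    proof
      assume "i \<le> j - 1"
      then have "zs K ! i \<le> c" using sorted_nth_mono[OF st(1), of i "j - 1"] j by simp
      then show False using i cd by simp
    qed
    moreover have "\<not> j \<le> i"
    proof
      assume "j \<le> i"
      then have "d \<le> zs K ! i" using sorted_nth_mono[OF st(1), of j i] j i by simp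
      then show False using i cd by simp
    qed
    ultimately show False by simp
  qed
qed

lemma reach_ge: "K \<in> reach a b p K0 \<Longrightarrow> \<forall>z. K0 z \<le> K z"
proof (induction rule: reach.induct)
  case init then show ?case by simp
next
  case (bisect K c d)
  have "K ((c + d) / 2) = 0" by (rule mid_not_node[OF bisect.hyps(2)])
  then show ?case using bisect.IH by (metis fun_upd_apply le_zero_eq zero_le_one)
next
  case (incr K z)
  then show ?case by (metis fun_upd_apply le_Suc_eq)
qed

lemma is_knotvec_kv: "is_knotvec g a b p K \<Longrightarrow> a < b \<Longrightarrow> kv a b p K"
proof -
  assume k: "is_knotvec g a b p K" and ab: "a < b"
  have "K z \<le> p + 1" for z
  proof (cases "z \<in> {a<..<b}")
    case True
    then have "K z \<le> p" using k unfolding is_knotvec_def by blast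
    then show ?thesis by simp
  next
    case False
    then consider "z = a" | "z = b" | "z \<notin> {a..b}" by force
    then show ?thesis
    proof cases
      case 3
      then have "z \<notin> nodes_par K" using k unfolding is_knotvec_def by auto
      then show ?thesis unfolding nodes_par_def by simp
    qed (use k in \<open>auto simp: is_knotvec_def\<close>)
  qed
  then show ?thesis using k ab unfolding is_knotvec_def kv_def by auto
qed


locale mainctx =
  fixes \<Omega> \<Gamma> :: "pt set" and cl :: bool and g :: "real \<Rightarrow> pt" and a b :: real and p :: nat
    and K0 Kb Kc :: knotvec and kmax :: real and lo hi :: "nat \<Rightarrow> real" and w0 :: "int \<Rightarrow> real"
    and Bstar :: "real list \<Rightarrow> real \<Rightarrow> real" and v :: "pt \<Rightarrow> real"
  assumes geom: "geom_setting \<Omega> \<Gamma> cl g a b"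
    and K0kv: "is_knotvec g a b p K0" and p1: "1 \<le> p"
    and mlo: "lo 0 \<le> a" "\<And>k. lo (Suc k) \<le> lo k"
    and mhi: "b \<le> hi 0" "\<And>k. hi k \<le> hi (Suc k)"
    and w0_pos: "\<And>i. i \<in> idx a p K0 \<Longrightarrow> 0 < w0 i"
    and dual: "\<And>K i. K \<in> Kset g a b p K0 kmax \<Longrightarrow> i \<in> idx a p K \<Longrightarrow>
        Bstar (window a p lo hi K i) \<in> borel_measurable (lebesgue_on {a..b}) \<and>
        integrable (lebesgue_on {a..b}) (\<lambda>t. (Bstar (window a p lo hi K i) t)\<^sup>2) \<and>
        (\<forall>t. t \<notin> {tk a p lo hi K (i - 1) .. tk a p lo hi K (i + int p)} \<longrightarrow> Bstar (window a p lo hi K i) t = 0) \<and>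
        (\<forall>j\<in>idx a p K. (LINT t|lebesgue_on {a..b}. Bstar (window a p lo hi K i) t * bspl (tk a p lo hi K) j p t)
            = (if i = j then 1 else 0))"
    and Kb: "Kb \<in> Kset g a b p K0 kmax"
    and Kc: "Kc \<in> Kset g a b p K0 kmax"
    and ref: "refines g Kc Kb"
begin

lemma ab: "a < b" using geom unfolding geom_setting_def by auto

sublocale kctx a b p lo hi
  using ab mlo mhi by unfold_locales auto

lemma Gam: "\<Gamma> = g ` {a..b}" using geom unfolding geom_setting_def by auto
lemma contg: "continuous_on {a..b} g" using geom unfolding geom_setting_def pw_C1_def by auto
lemma injc: "cl \<Longrightarrow> g a = g b \<and> inj_on g {a..<b}" using geom unfolding geom_setting_def by auto
lemma injo: "\<not> cl \<Longrightarrow> inj_on g {a..b}" using geom unfolding geom_setting_def by auto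

abbreviation KS where "KS \<equiv> Kset g a b p K0 kmax"
abbreviation W where "W K \<equiv> weights a b p lo hi K0 w0 K"
abbreviation wh where "wh \<equiv> what a b p lo hi K0 w0"
abbreviation gi where "gi \<equiv> ginv cl g a b"
abbreviation Rh where "Rh K i x \<equiv> Rhat a b p lo hi K0 w0 K i x"
abbreviation Rf where "Rf K i y \<equiv> Rfun cl g a b p lo hi K0 w0 K i y"
abbreviation Rb where "Rb K i y \<equiv> Rbar cl g a b p lo hi K0 w0 K i y"
abbreviation Rs where "Rs K i x \<equiv> Rstar a b p lo hi K0 w0 Bstar K i x"
abbreviation al where "al K i \<equiv> alpha g a b p lo hi K0 w0 Bstar K v i"
abbreviation win where "win K i \<equiv> window a p lo hi K i"

lemma kv0: "kv a b p K0" using is_knotvec_kv[OF K0kv ab] .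

lemma KS_kv: "K \<in> KS \<Longrightarrow> kv a b p K"
  using is_knotvec_kv ab unfolding Kset_def by blast

lemma KS_ge: "K \<in> KS \<Longrightarrow> \<forall>z. K0 z \<le> K z"
  using reach_ge unfolding Kset_def by blast

lemma Kbc: "\<forall>z. Kb z \<le> Kc z"
proof
  fix z show "Kb z \<le> Kc z"
  proof (cases "z \<in> nodes_par Kb")
    case True then show ?thesis using ref unfolding refines_def by blast
  next
    case False then show ?thesis unfolding nodes_par_def by simp
  qed
qed

lemma what_eq: "x \<in> {a..b} \<Longrightarrow> wh x = (\<Sum>k\<in>idx a p K0. w0 k * BB K0 k x)"
  unfolding what_def by simp

lemma dual_K:
  assumes K: "K \<in> KS" and i: "i \<in> idx a p K"
  shows "(LINT t|lebesgue_on {a..b}. Bstar (win K i) t * (\<Sum>j\<in>idx a p K. f j * BB K j t)) = f i"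
proof -
  note d = dual[OF K i]
  show ?thesis
    by (rule dual_sum[where G = "\<lambda>j t. BB K j t" and C = "2 ^ p"])
       (use d BB_meas BB_bound[OF KS_kv[OF K]] i in \<open>auto simp: idx_def\<close>)
qed

lemma weights_prop:
  assumes K: "K \<in> KS"
  shows "(\<forall>k\<in>idx a p K. 0 < W K k) \<and> (\<forall>x\<in>{a..b}. wh x = (\<Sum>k\<in>idx a p K. W K k * BB K k x)) \<and>
    W K (1 - int p) = w0 (1 - int p) \<and> W K (NN K - int p) = w0 (NN K0 - int p)"
proof -
  have k: "kv a b p K" by (rule KS_kv[OF K])
  obtain wK where e: "expands K0 K w0 wK" using expands_le[OF kv0 k KS_ge[OF K]] by blast
  define w' where "w' = (\<lambda>k. if k \<in> idx a p K then wK k else 0)"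
  define P where "P = (\<lambda>w. (\<forall>x\<in>{a..b}. wh x = (\<Sum>k\<in>idx a p K. w k * BB K k x)) \<and>
     (\<forall>k. k \<notin> idx a p K \<longrightarrow> w k = 0))"
  have Pw': "P w'"
  proof -
    have "wh x = (\<Sum>k\<in>idx a p K. w' k * BB K k x)" if x: "x \<in> {a..b}" for x
    proof -
      have "wh x = (\<Sum>k\<in>idx a p K0. w0 k * BB K0 k x)" using what_eq[OF x] .
      also have "\<dots> = (\<Sum>k\<in>idx a p K. wK k * BB K k x)" using e unfolding expands_def by blast
      also have "\<dots> = (\<Sum>k\<in>idx a p K. w' k * BB K k x)" unfolding w'_def by simp
      finally show ?thesis .
    qed
    then show ?thesis unfolding P_def w'_def by simp
  qed
  have uniq: "w = w'" if Pw: "P w" for w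
  proof
    fix k
    show "w k = w' k"
    proof (cases "k \<in> idx a p K")
      case True
      have "w k = (LINT t|lebesgue_on {a..b}. Bstar (win K k) t * (\<Sum>j\<in>idx a p K. w j * BB K j t))"
        using dual_K[OF K True] by simp
      also have "\<dots> = (LINT t|lebesgue_on {a..b}. Bstar (win K k) t * (\<Sum>j\<in>idx a p K. w' j * BB K j t))"
        using Pw Pw' unfolding P_def by (intro Bochner_Integration.integral_cong) auto
      also have "\<dots> = w' k" using dual_K[OF K True] by simp
      finally show ?thesis .
    next
      case False then show ?thesis using Pw Pw' unfolding P_def by simp
    qed
  qed
  have WK: "W K = w'" unfolding weights_def using Pw' uniq unfolding P_def by (intro the_equality) auto
  have pos: "\<forall>j\<in>idx a p K0. 0 < w0 j" using w0_pos by blast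
  have i1: "1 - int p \<in> idx a p K" "NN K - int p \<in> idx a p K" using NN_ge[OF k] unfolding idx_def by auto
  show ?thesis using Pw' e pos i1 unfolding WK P_def expands_def w'_def by auto
qed

lemma W_pos: "K \<in> KS \<Longrightarrow> k \<in> idx a p K \<Longrightarrow> 0 < W K k"
  using weights_prop by blast

lemma wh_sum: "K \<in> KS \<Longrightarrow> x \<in> {a..b} \<Longrightarrow> wh x = (\<Sum>k\<in>idx a p K. W K k * BB K k x)"
  using weights_prop by blast

lemma W_int: "K \<in> KS \<Longrightarrow> i \<in> idx a p K \<Longrightarrow> W K i = (LINT t|lebesgue_on {a..b}. Bstar (win K i) t * wh t)"
proof -
  assume K: "K \<in> KS" and i: "i \<in> idx a p K"
  have "(LINT t|lebesgue_on {a..b}. Bstar (win K i) t * wh t) =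
     (LINT t|lebesgue_on {a..b}. Bstar (win K i) t * (\<Sum>j\<in>idx a p K. W K j * BB K j t))"
    by (intro Bochner_Integration.integral_cong) (auto simp: wh_sum[OF K])
  also have "\<dots> = W K i" by (rule dual_K[OF K i])
  finally show ?thesis by simp
qed

lemma wh_nonneg: "0 \<le> wh x"
proof -
  have "0 \<le> w0 k * BB K0 k x" if "k \<in> idx a p K0" for k
    using w0_pos[OF that] BB_nonneg[OF kv0, of k x] by simp
  then show ?thesis unfolding what_def by (simp add: sum_nonneg)
qed

lemma Rh_nonneg: "K \<in> KS \<Longrightarrow> k \<in> idx a p K \<Longrightarrow> 0 \<le> Rh K k x"
proof -
  assume K: "K \<in> KS" and k: "k \<in> idx a p K"
  have "0 \<le> W K k * BB K k x" using W_pos[OF K k] BB_nonneg[OF KS_kv[OF K], of k x] by simp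
  then show ?thesis unfolding Rhat_def using wh_nonneg by simp
qed

lemma Rh_pos:
  assumes K: "K \<in> KS" and k: "k \<in> idx a p K" and x: "T K (k - 1) < x" "x < T K (k + int p)"
    and nk: "\<And>j. k - 1 \<le> j \<Longrightarrow> j \<le> k + int p \<Longrightarrow> x \<noteq> T K j"
  shows "0 < Rh K k x"
proof -
  have kv: "kv a b p K" by (rule KS_kv[OF K])
  have kr: "1 - int p \<le> k" "k \<le> NN K - int p" using k unfolding idx_def by auto
  have B: "0 < BB K k x" by (rule bspl_pos[OF tk_mono[OF kv] x nk])
  have xab: "x \<in> {a..b}" using x tk_in[OF kv, of "k - 1"] tk_in[OF kv, of "k + int p"] kr by auto
  have "W K k * BB K k x \<le> (\<Sum>j\<in>idx a p K. W K j * BB K j x)"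
  proof (rule member_le_sum)
    fix j assume "j \<in> idx a p K - {k}"
    then have "0 < W K j" using W_pos[OF K] by blast
    then show "0 \<le> W K j * BB K j x" using BB_nonneg[OF kv, of j x] by simp
  qed (use k in \<open>auto simp: idx_def\<close>)
  moreover have "0 < W K k * BB K k x" using W_pos[OF K k] B by simp
  ultimately have "0 < wh x" using wh_sum[OF K xab] by simp
  then show ?thesis unfolding Rhat_def using W_pos[OF K k] B by simp
qed

lemma gi_g: assumes "x \<in> {a..<b}" shows "gi (g x) = x"
proof (cases cl)
  case True
  then show ?thesis unfolding ginv_def using injc assms by (simp add: inv_into_f_f)
next
  case False
  then show ?thesis unfolding ginv_def using injo assms by (simp add: inv_into_f_f)
qed

lemma gi_in: assumes "y \<in> \<Gamma>" shows "gi y \<in> {a..b}"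
proof (cases cl)
  case True
  have "y \<in> g ` {a..<b}"
  proof -
    obtain x where x: "x \<in> {a..b}" "y = g x" using assms Gam by auto
    show ?thesis
    proof (cases "x = b")
      case True then show ?thesis using x injc \<open>cl\<close> ab by (metis atLeastLessThan_iff image_eqI order_refl)
    next
      case False then show ?thesis using x by auto
    qed
  qed
  then have "inv_into {a..<b} g y \<in> {a..<b}" by (rule inv_into_into)
  then show ?thesis unfolding ginv_def using True by auto
next
  case False
  have "y \<in> g ` {a..b}" using assms Gam by simp
  then have "inv_into {a..b} g y \<in> {a..b}" by (rule inv_into_into)
  then show ?thesis unfolding ginv_def using False by simp
qed

end


context mainctx begin

definition ext :: "knotvec \<Rightarrow> (int \<Rightarrow> real) \<Rightarrow> int \<Rightarrow> real" where
  "ext K c k = (if k \<in> Iset cl a p K then c k else 0) + (if cl \<and> k = NN K - int p then c (1 - int p) else 0)"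

lemma Rf_eq: "y \<in> \<Gamma> \<Longrightarrow> Rf K i y = Rh K i (gi y)"
  unfolding Rfun_def using Gam by simp

lemma Iset_sub: "kv a b p K \<Longrightarrow> Iset cl a p K \<subseteq> idx a p K"
  unfolding Iset_def idx_def ocase_def by auto

lemma Jrew:
  assumes k: "kv a b p K" and y: "y \<in> \<Gamma>"
  shows "(\<Sum>i\<in>Iset cl a p K. c i * Rb K i y) = (\<Sum>k\<in>idx a p K. ext K c k * Rh K k (gi y))"
proof -
  define r where "r = (\<lambda>k. Rh K k (gi y))"
  define I where "I = Iset cl a p K"
  define N where "N = NN K"
  have Np: "int p + 1 \<le> N" unfolding N_def by (rule NN_ge[OF k])
  have Rb: "Rb K i y = r i + (if i = 1 - int p then r (N - int p) else 0)" for i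
    unfolding Rbar_def r_def N_def using Rf_eq[OF y] by simp
  have fin: "finite I" unfolding I_def Iset_def by simp
  have cI: "1 - int p \<in> I \<longleftrightarrow> cl" unfolding I_def Iset_def ocase_def using Np N_def p1 by auto
  have NI: "N - int p \<notin> I" unfolding I_def Iset_def N_def by auto
  have Nidx: "N - int p \<in> idx a p K" unfolding idx_def N_def using Np N_def by auto
  have sub: "I \<subseteq> idx a p K" unfolding I_def by (rule Iset_sub[OF k])
  have finx: "finite (idx a p K)" unfolding idx_def by simp
  have "(\<Sum>i\<in>I. c i * Rb K i y) = (\<Sum>i\<in>I. c i * r i) + (\<Sum>i\<in>I. if i = 1 - int p then c i * r (N - int p) else 0)"
    unfolding Rb by (simp add: sum.distrib[symmetric] algebra_simps if_distrib cong: if_cong)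
  also have "(\<Sum>i\<in>I. if i = 1 - int p then c i * r (N - int p) else 0) = (if cl then c (1 - int p) * r (N - int p) else 0)"
    using fin cI by (simp add: sum.delta')
  finally have L: "(\<Sum>i\<in>I. c i * Rb K i y) = (\<Sum>i\<in>I. c i * r i) + (if cl then c (1 - int p) * r (N - int p) else 0)" .
  have "(\<Sum>k\<in>idx a p K. ext K c k * r k) = (\<Sum>k\<in>idx a p K. (if k \<in> I then c k * r k else 0))
      + (\<Sum>k\<in>idx a p K. (if k = N - int p then (if cl then c (1 - int p) * r k else 0) else 0))"
    unfolding ext_def I_def[symmetric] N_def[symmetric] sum.distrib[symmetric] by (intro sum.cong) (auto simp: algebra_simps)
  also have "(\<Sum>k\<in>idx a p K. (if k \<in> I then c k * r k else 0)) = (\<Sum>k\<in>I. c k * r k)"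
    using finx sub by (simp add: sum.If_cases Int_absorb1)
  also have "(\<Sum>k\<in>idx a p K. (if k = N - int p then (if cl then c (1 - int p) * r k else 0) else 0)) =
      (if cl then c (1 - int p) * r (N - int p) else 0)"
    using finx Nidx by (simp add: sum.delta')
  finally show ?thesis using L unfolding r_def I_def by simp
qed

lemma Jop_eq: "Jop cl g a b p lo hi K0 w0 Bstar K v y = (\<Sum>i\<in>Iset cl a p K. al K i * Rb K i y)"
  unfolding Jop_def ..

lemma NT:
  assumes z: "z \<in> {a..b}" and lt: "Kb z < Kc z"
  shows "g z \<in> Ntilde cl g a b Kc Kb"
proof -
  have kb: "kv a b p Kb" and kc: "kv a b p Kc" using KS_kv Kb Kc by auto
  have za: "z \<noteq> a" "z \<noteq> b" using lt kb kc unfolding kv_def by auto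
  then have z2: "z \<in> {a..<b}" using z by auto
  have zc: "z \<in> nodes_par Kc" using lt unfolding nodes_par_def by simp
  show ?thesis
  proof (cases "Kb z = 0")
    case True
    have "g z \<notin> Npts g Kb"
    proof
      assume "g z \<in> Npts g Kb"
      then obtain z' where z': "z' \<in> nodes_par Kb" "g z = g z'" unfolding Npts_def by auto
      have z'r: "z' \<in> {a..b}" using kv_sub[OF kb z'(1)] by simp
      have "z = z'"
      proof (cases cl)
        case True
        show ?thesis
        proof (cases "z' = b")
          case True
          then have "g z = g a" using z'(2) injc \<open>cl\<close> by simp
          then have "z = a" using inj_onD[OF conjunct2[OF injc[OF \<open>cl\<close>]], of z a] z2 ab by simp
          then show ?thesis using za by simp
        next
          case False
          then have "z' \<in> {a..<b}" using z'r by auto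
          then show ?thesis using injc[OF \<open>cl\<close>] z2 z'(2) by (auto dest: inj_onD)
        qed
      next
        case False
        then show ?thesis using injo z z'r z'(2) by (auto dest: inj_onD)
      qed
      then show False using z'(1) True unfolding nodes_par_def by simp
    qed
    moreover have "g z \<in> Npts g Kc" using zc unfolding Npts_def by simp
    ultimately show ?thesis unfolding Ntilde_def by simp
  next
    case False
    then have zb: "z \<in> nodes_par Kb" unfolding nodes_par_def by simp
    have "gi (g z) = z" by (rule gi_g[OF z2])
    then show ?thesis unfolding Ntilde_def Npts_def using zb zc lt by auto
  qed
qed

lemma avoid:
  assumes k: "k \<in> idx a p Kc"
    and dis: "g ` {T Kc (k - 1)..T Kc (k + int p)} \<inter> Ntilde cl g a b Kc Kb = {}"
  shows "\<And>z. T Kc (k - 1) \<le> z \<Longrightarrow> z \<le> T Kc (k + int p) \<Longrightarrow> Kb z = Kc z"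
proof -
  fix z assume z: "T Kc (k - 1) \<le> z" "z \<le> T Kc (k + int p)"
  have kc: "kv a b p Kc" using KS_kv Kc by auto
  have kr: "1 - int p \<le> k" "k \<le> NN Kc - int p" using k unfolding idx_def by auto
  have zab: "z \<in> {a..b}" using z tk_in[OF kc, of "k - 1"] tk_in[OF kc, of "k + int p"] kr by auto
  show "Kb z = Kc z"
  proof (rule ccontr)
    assume "Kb z \<noteq> Kc z"
    then have "Kb z < Kc z" using Kbc by (simp add: le_neq_trans)
    from NT[OF zab this] have "g z \<in> Ntilde cl g a b Kc Kb" .
    moreover have "g z \<in> g ` {T Kc (k - 1)..T Kc (k + int p)}" using z by simp
    ultimately show False using dis by blast
  qed
qed

lemma supp_R:
  assumes K: "K \<in> KS" and k: "k \<in> idx a p K"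
    and h: "\<And>x. x \<in> {a..<b} \<Longrightarrow> 0 < Rh K k x \<Longrightarrow> g x \<in> A"
  shows "g ` {T K (k - 1)..T K (k + int p)} \<subseteq> closure A"
proof -
  have kv: "kv a b p K" using KS_kv[OF K] .
  have kr: "1 - int p \<le> k" "k \<le> NN K - int p" using k unfolding idx_def by auto
  show ?thesis
  proof (rule supp_gen[OF contg, where F = "T K ` {k - 1..k + int p}"])
    show "a \<le> T K (k - 1)" using tk_in[OF kv, of "k - 1"] kr by simp
    show "T K (k - 1) < T K (k + int p)" using tk_strict[OF kv kr] .
    show "T K (k + int p) \<le> b" using tk_in[OF kv, of "k + int p"] kr by simp
    show "finite (T K ` {k - 1..k + int p})" by simp
    fix x assume x: "T K (k - 1) < x" "x < T K (k + int p)" "x \<notin> T K ` {k - 1..k + int p}"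
    have xab: "x \<in> {a..<b}" using x tk_in[OF kv, of "k - 1"] tk_in[OF kv, of "k + int p"] kr by auto
    have "0 < Rh K k x" by (rule Rh_pos[OF K k x(1,2)]) (use x(3) in auto)
    then show "g x \<in> A" using h xab by simp
  qed
qed

lemma supp_Rb:
  assumes K: "K \<in> KS" and k: "k \<in> idx a p K" and k1: "k \<noteq> 1 - int p"
  shows "g ` {T K (k - 1)..T K (k + int p)} \<subseteq> closure {y \<in> \<Gamma>. Rb K k y \<noteq> 0}"
proof (rule supp_R[OF K k])
  fix x assume x: "x \<in> {a..<b}" "0 < Rh K k x"
  have gx: "g x \<in> \<Gamma>" using x Gam by auto
  have "Rb K k (g x) = Rh K k x" unfolding Rbar_def using k1 Rf_eq[OF gx] gi_g[OF x(1)] by simp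
  then show "g x \<in> {y \<in> \<Gamma>. Rb K k y \<noteq> 0}" using gx x by simp
qed

lemma supp_Rb1:
  assumes K: "K \<in> KS" and k: "k \<in> {1 - int p, NN K - int p}"
  shows "g ` {T K (k - 1)..T K (k + int p)} \<subseteq> closure {y \<in> \<Gamma>. Rb K (1 - int p) y \<noteq> 0}"
proof -
  have kv: "kv a b p K" using KS_kv[OF K] .
  have Np: "int p + 1 \<le> NN K" by (rule NN_ge[OF kv])
  have i1: "1 - int p \<in> idx a p K" "NN K - int p \<in> idx a p K" unfolding idx_def using Np by auto
  have ki: "k \<in> idx a p K" using k i1 by auto
  show ?thesis
  proof (rule supp_R[OF K ki])
    fix x assume x: "x \<in> {a..<b}" "0 < Rh K k x"
    have gx: "g x \<in> \<Gamma>" using x Gam by auto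
    have "Rb K (1 - int p) (g x) = Rh K (1 - int p) x + Rh K (NN K - int p) x"
      unfolding Rbar_def using Rf_eq[OF gx] gi_g[OF x(1)] by simp
    moreover have "0 \<le> Rh K (1 - int p) x" "0 \<le> Rh K (NN K - int p) x" using Rh_nonneg[OF K] i1 by auto
    ultimately have "0 < Rb K (1 - int p) (g x)" using x(2) k by auto
    then show "g x \<in> {y \<in> \<Gamma>. Rb K (1 - int p) y \<noteq> 0}" using gx by simp
  qed
qed

lemma win_eq:
  assumes "\<forall>j. k - 1 \<le> j \<longrightarrow> j \<le> k + int p \<longrightarrow> T K' j = T K (j - k + k')"
  shows "win K' k = win K k'"
  unfolding window_def
proof (rule nth_equalityI)
  show "length (map (T K') [k - 1..k + int p]) = length (map (T K) [k' - 1..k' + int p])" by simp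
  fix n assume n: "n < length (map (T K') [k - 1..k + int p])"
  then have n2: "int n \<le> int p + 1" by simp
  have "[k - 1..k + int p] ! n = k - 1 + int n" using n2 by (simp add: nth_upto)
  moreover have "[k' - 1..k' + int p] ! n = k' - 1 + int n" using n2 by (simp add: nth_upto)
  ultimately show "map (T K') [k - 1..k + int p] ! n = map (T K) [k' - 1..k' + int p] ! n"
    using n assms[rule_format, of "k - 1 + int n"] n2 by (simp add: algebra_simps)
qed

end


context mainctx begin

lemma ext_ends:
  assumes k: "kv a b p K"
  shows "ext K c (1 - int p) = (if cl then c (1 - int p) else 0)"
    "ext K c (NN K - int p) = (if cl then c (1 - int p) else 0)"
proof -
  have Np: "int p + 1 \<le> NN K" by (rule NN_ge[OF k])
  show "ext K c (1 - int p) = (if cl then c (1 - int p) else 0)"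
    unfolding ext_def Iset_def ocase_def using Np p1 by auto
  show "ext K c (NN K - int p) = (if cl then c (1 - int p) else 0)"
    unfolding ext_def Iset_def ocase_def using Np p1 by auto
qed

lemma ext_mid: "kv a b p K \<Longrightarrow> k \<in> Iset cl a p K \<Longrightarrow> ext K c k = c k"
  unfolding ext_def Iset_def by auto

lemma Iset_out: "k \<in> idx a p K \<Longrightarrow> k \<notin> Iset cl a p K \<Longrightarrow> k = NN K - int p \<or> (\<not> cl \<and> k = 1 - int p)"
  unfolding idx_def Iset_def ocase_def by (auto split: if_splits)

lemma Iset_in: "2 - int p \<le> k \<Longrightarrow> k \<le> NN K - int p - 1 \<Longrightarrow> k \<in> Iset cl a p K"
  unfolding Iset_def ocase_def by auto

lemma Iset_range: "k \<in> Iset cl a p K \<Longrightarrow> k \<noteq> 1 - int p \<Longrightarrow> 2 - int p \<le> k \<and> k \<le> NN K - int p - 1"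
  unfolding Iset_def ocase_def by (auto split: if_splits)

lemma Rh_def': "Rh K k x = W K k * BB K k x / wh x"
  unfolding Rhat_def ..

lemma Rs_def': "Rs K k x = Bstar (win K k) x * wh x / W K k"
  unfolding Rstar_def ..

theorem main_ctx:
  "\<exists>c :: int \<Rightarrow> real. \<forall>y\<in>\<Gamma>.
     Jop cl g a b p lo hi K0 w0 Bstar Kc v y - Jop cl g a b p lo hi K0 w0 Bstar Kb v y
     = (\<Sum>i\<in>{i \<in> Iset cl a p Kc.
              closure {x \<in> \<Gamma>. Rb Kc i x \<noteq> 0} \<inter> Ntilde cl g a b Kc Kb \<noteq> {}}.
          c i * Rb Kc i y)"
proof -
  have kb: "kv a b p Kb" and kc: "kv a b p Kc" using KS_kv Kb Kc by auto
  define Nb where "Nb = NN Kb"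
  define Nc where "Nc = NN Kc"
  have Nbp: "int p + 1 \<le> Nb" unfolding Nb_def by (rule NN_ge[OF kb])
  have Ncp: "int p + 1 \<le> Nc" unfolding Nc_def by (rule NN_ge[OF kc])
  define \<beta> where "\<beta> = (\<lambda>K. ext K (al K))"
  have Jr: "Jop cl g a b p lo hi K0 w0 Bstar K v y = (\<Sum>k\<in>idx a p K. \<beta> K k * Rh K k (gi y))"
    if "kv a b p K" "y \<in> \<Gamma>" for K y
    unfolding Jop_eq \<beta>_def by (rule Jrew[OF that])
  define n where "n = (\<lambda>j. \<beta> Kb j * W Kb j)"
  obtain e where E: "expands Kb Kc n e" using expands_le[OF kb kc Kbc] by blast
  define d where "d = (\<lambda>k. e k / W Kc k)"
  define \<gamma> where "\<gamma> = (\<lambda>k. \<beta> Kc k - d k)"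
  have Esum: "(\<Sum>j\<in>idx a p Kb. n j * BB Kb j x) = (\<Sum>k\<in>idx a p Kc. e k * BB Kc k x)" for x
    using E unfolding expands_def by blast
  have JB: "Jop cl g a b p lo hi K0 w0 Bstar Kb v y = (\<Sum>k\<in>idx a p Kc. d k * Rh Kc k (gi y))"
    if y: "y \<in> \<Gamma>" for y
  proof -
    define x where "x = gi y"
    have "Jop cl g a b p lo hi K0 w0 Bstar Kb v y = (\<Sum>j\<in>idx a p Kb. \<beta> Kb j * Rh Kb j x)"
      unfolding x_def by (rule Jr[OF kb y])
    also have "\<dots> = (\<Sum>j\<in>idx a p Kb. n j * BB Kb j x) / wh x"
      unfolding Rh_def' n_def sum_divide_distrib by (simp add: algebra_simps)
    also have "\<dots> = (\<Sum>k\<in>idx a p Kc. e k * BB Kc k x) / wh x" unfolding Esum ..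
    also have "\<dots> = (\<Sum>k\<in>idx a p Kc. d k * Rh Kc k x)"
      unfolding Rh_def' d_def sum_divide_distrib
      by (intro sum.cong refl) (use W_pos[OF Kc] in \<open>force simp: field_simps\<close>)
    finally show ?thesis unfolding x_def .
  qed
  have wp: "W Kb (1 - int p) = W Kc (1 - int p)" "W Kb (Nb - int p) = W Kc (Nc - int p)"
    using weights_prop[OF Kb] weights_prop[OF Kc] unfolding Nb_def Nc_def by auto
  have i1b: "1 - int p \<in> idx a p Kb" "Nb - int p \<in> idx a p Kb" using Nbp unfolding idx_def Nb_def by auto
  have i1c: "1 - int p \<in> idx a p Kc" "Nc - int p \<in> idx a p Kc" using Ncp unfolding idx_def Nc_def by auto
  have Wb1: "0 < W Kb (1 - int p)" "0 < W Kb (Nb - int p)" using W_pos[OF Kb] i1b by auto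
  have eE: "e (1 - int p) = n (1 - int p)" "e (Nc - int p) = n (Nb - int p)"
    using E unfolding expands_def Nb_def Nc_def by auto
  have d1: "d (1 - int p) = \<beta> Kb (1 - int p)" "d (Nc - int p) = \<beta> Kb (Nb - int p)"
    unfolding d_def eE n_def using wp Wb1 by auto
  have bE: "\<beta> K (1 - int p) = (if cl then al K (1 - int p) else 0)"
    "\<beta> K (NN K - int p) = (if cl then al K (1 - int p) else 0)" if "kv a b p K" for K
    unfolding \<beta>_def using ext_ends[OF that] by auto
  have g1: "\<gamma> (1 - int p) = (if cl then al Kc (1 - int p) - al Kb (1 - int p) else 0)"
    unfolding \<gamma>_def d1 bE[OF kc] bE[OF kb] by simp
  have g2: "\<gamma> (Nc - int p) = (if cl then al Kc (1 - int p) - al Kb (1 - int p) else 0)"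
    unfolding \<gamma>_def d1 using bE[OF kc] bE[OF kb] unfolding Nb_def Nc_def by simp
  define S where "S = {i \<in> Iset cl a p Kc. closure {x \<in> \<Gamma>. Rb Kc i x \<noteq> 0} \<inter> Ntilde cl g a b Kc Kb \<noteq> {}}"
  have MC: "\<gamma> i = 0" if iI: "i \<in> Iset cl a p Kc" and iS: "i \<notin> S" for i
  proof -
    have dis: "closure {x \<in> \<Gamma>. Rb Kc i x \<noteq> 0} \<inter> Ntilde cl g a b Kc Kb = {}" using iS iI unfolding S_def by simp
    have iidx: "i \<in> idx a p Kc" using iI Iset_sub[OF kc] by auto
    show ?thesis
    proof (cases "i = 1 - int p")
      case True
      have clt: cl using iI True unfolding Iset_def ocase_def by (auto split: if_splits)
      have eqw: "\<forall>z. T Kc (k - 1) \<le> z \<longrightarrow> z \<le> T Kc (k + int p) \<longrightarrow> Kb z = Kc z"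
        if kk: "k \<in> {1 - int p, Nc - int p}" for k
      proof -
        have "g ` {T Kc (k - 1)..T Kc (k + int p)} \<subseteq> closure {y \<in> \<Gamma>. Rb Kc (1 - int p) y \<noteq> 0}"
          by (rule supp_Rb1[OF Kc]) (use kk Nc_def in auto)
        then have "g ` {T Kc (k - 1)..T Kc (k + int p)} \<inter> Ntilde cl g a b Kc Kb = {}" using dis True by blast
        moreover have "k \<in> idx a p Kc" using kk i1c by auto
        ultimately show ?thesis using avoid by blast
      qed
      obtain k1 where k1: "k1 \<in> idx a p Kb" "\<forall>j. 1 - int p - 1 \<le> j \<longrightarrow> j \<le> 1 - int p + int p \<longrightarrow> T Kc j = T Kb (j - (1 - int p) + k1)"
          "k1 = 1 - int p \<longleftrightarrow> 1 - int p = 1 - int p"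
        using window_corr[OF kb kc Kbc i1c(1)] eqw[of "1 - int p"] by auto
      obtain k2 where k2: "k2 \<in> idx a p Kb" "\<forall>j. Nc - int p - 1 \<le> j \<longrightarrow> j \<le> Nc - int p + int p \<longrightarrow> T Kc j = T Kb (j - (Nc - int p) + k2)"
          "k2 = NN Kb - int p \<longleftrightarrow> Nc - int p = NN Kc - int p"
        using window_corr[OF kb kc Kbc i1c(2)] eqw[of "Nc - int p"] by blast
      have k1e: "k1 = 1 - int p" using k1(3) by simp
      have k2e: "k2 = Nb - int p" using k2(3) unfolding Nb_def Nc_def by simp
      have w1: "win Kc (1 - int p) = win Kb (1 - int p)" using win_eq[OF k1(2)] k1e by simp
      have w2: "win Kc (Nc - int p) = win Kb (Nb - int p)" using win_eq[OF k2(2)] k2e by simp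
      have r1: "Rs Kc (1 - int p) t = Rs Kb (1 - int p) t" for t unfolding Rs_def' w1 wp by simp
      have r2: "Rs Kc (Nc - int p) t = Rs Kb (Nb - int p) t" for t unfolding Rs_def' w2 wp by simp
      have "al Kc (1 - int p) = al Kb (1 - int p)"
        unfolding alpha_def using r1 r2 unfolding Nb_def Nc_def by simp
      then show ?thesis using True g1 by simp
    next
      case False
      have ir: "2 - int p \<le> i" "i \<le> Nc - int p - 1" using Iset_range[OF iI False] Nc_def by auto
      have "g ` {T Kc (i - 1)..T Kc (i + int p)} \<subseteq> closure {y \<in> \<Gamma>. Rb Kc i y \<noteq> 0}"
        by (rule supp_Rb[OF Kc iidx False])
      then have "g ` {T Kc (i - 1)..T Kc (i + int p)} \<inter> Ntilde cl g a b Kc Kb = {}" using dis by blast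
      then have eqw: "\<And>z. T Kc (i - 1) \<le> z \<Longrightarrow> z \<le> T Kc (i + int p) \<Longrightarrow> Kb z = Kc z"
        using avoid[OF iidx] by blast
      obtain k' where k': "k' \<in> idx a p Kb" "\<forall>j. i - 1 \<le> j \<longrightarrow> j \<le> i + int p \<longrightarrow> T Kc j = T Kb (j - i + k')"
          "k' = 1 - int p \<longleftrightarrow> i = 1 - int p" "k' = NN Kb - int p \<longleftrightarrow> i = NN Kc - int p"
        using window_corr[OF kb kc Kbc iidx eqw] by blast
      have k'1: "k' \<noteq> 1 - int p" using k'(3) False by simp
      have k'2: "k' \<noteq> Nb - int p" using k'(4) ir unfolding Nb_def Nc_def by simp
      have k'r: "2 - int p \<le> k'" "k' \<le> Nb - int p - 1" using k'(1) k'1 k'2 unfolding idx_def Nb_def by auto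
      have k'I: "k' \<in> Iset cl a p Kb" using Iset_in k'r Nb_def by simp
      have w: "win Kc i = win Kb k'" using win_eq[OF k'(2)] .
      have Wi: "W Kc i = W Kb k'" using W_int[OF Kc iidx] W_int[OF Kb k'(1)] w by simp
      have r: "Rs Kc i t = Rs Kb k' t" for t unfolding Rs_def' w Wi ..
      have alq: "al Kc i = al Kb k'" unfolding alpha_def using False k'1 r by simp
      have ei: "e i = n k'"
      proof -
        have "e i = (LINT t|lebesgue_on {a..b}. Bstar (win Kc i) t * (\<Sum>k\<in>idx a p Kc. e k * BB Kc k t))"
          using dual_K[OF Kc iidx] by simp
        also have "\<dots> = (LINT t|lebesgue_on {a..b}. Bstar (win Kb k') t * (\<Sum>j\<in>idx a p Kb. n j * BB Kb j t))"
          unfolding w Esum ..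
        also have "\<dots> = n k'" by (rule dual_K[OF Kb k'(1)])
        finally show ?thesis .
      qed
      have bc: "\<beta> Kc i = al Kc i" unfolding \<beta>_def using ext_mid[OF kc iI] .
      have bb: "\<beta> Kb k' = al Kb k'" unfolding \<beta>_def using ext_mid[OF kb k'I] .
      have "d i = al Kb k'" unfolding d_def ei n_def bb Wi using W_pos[OF Kb k'(1)] by simp
      then show ?thesis unfolding \<gamma>_def bc alq by simp
    qed
  qed
  have extg: "ext Kc \<gamma> k = \<gamma> k" if k: "k \<in> idx a p Kc" for k
  proof (cases "k \<in> Iset cl a p Kc")
    case True then show ?thesis by (rule ext_mid[OF kc])
  next
    case False
    from Iset_out[OF k False] show ?thesis
    proof
      assume "k = NN Kc - int p"
      then show ?thesis using ext_ends(2)[OF kc, of \<gamma>] g1 g2 Nc_def by simp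
    next
      assume "\<not> cl \<and> k = 1 - int p"
      then show ?thesis using ext_ends(1)[OF kc, of \<gamma>] g1 by simp
    qed
  qed
  show ?thesis
  proof (intro exI ballI)
    fix y assume y: "y \<in> \<Gamma>"
    have fin: "finite (Iset cl a p Kc)" unfolding Iset_def by simp
    have "(\<Sum>i\<in>S. \<gamma> i * Rb Kc i y) = (\<Sum>i\<in>Iset cl a p Kc. \<gamma> i * Rb Kc i y)"
      by (rule sum.mono_neutral_left) (use fin MC in \<open>auto simp: S_def\<close>)
    also have "\<dots> = (\<Sum>k\<in>idx a p Kc. ext Kc \<gamma> k * Rh Kc k (gi y))" by (rule Jrew[OF kc y])
    also have "\<dots> = (\<Sum>k\<in>idx a p Kc. \<gamma> k * Rh Kc k (gi y))" using extg by simp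
    also have "\<dots> = (\<Sum>k\<in>idx a p Kc. \<beta> Kc k * Rh Kc k (gi y)) - (\<Sum>k\<in>idx a p Kc. d k * Rh Kc k (gi y))"
      unfolding \<gamma>_def by (simp add: sum_subtractf algebra_simps)
    also have "\<dots> = Jop cl g a b p lo hi K0 w0 Bstar Kc v y - Jop cl g a b p lo hi K0 w0 Bstar Kb v y"
      using Jr[OF kc y] JB[OF y] by simp
    finally show "Jop cl g a b p lo hi K0 w0 Bstar Kc v y - Jop cl g a b p lo hi K0 w0 Bstar Kb v y =
        (\<Sum>i\<in>{i \<in> Iset cl a p Kc. closure {x \<in> \<Gamma>. Rb Kc i x \<noteq> 0} \<inter> Ntilde cl g a b Kc Kb \<noteq> {}}. \<gamma> i * Rb Kc i y)"
      unfolding S_def by simp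
  qed
qed

end

theorem lemma3p1:
  fixes \<Omega> \<Gamma> :: "pt set" and cl :: bool and g :: "real \<Rightarrow> pt" and a b :: real and p :: nat
    and K0 Kb Kc :: knotvec and kmax :: real and lo hi :: "nat \<Rightarrow> real" and w0 :: "int \<Rightarrow> real"
    and Bstar :: "real list \<Rightarrow> real \<Rightarrow> real" and v :: "pt \<Rightarrow> real"
  assumes geom: "geom_setting \<Omega> \<Gamma> cl g a b"
    and p: "1 \<le> p"
    and K0: "is_knotvec g a b p K0"
    and kmax: "1 \<le> kmax"
    and lo: "lo 0 \<le> a" "\<And>k. lo (Suc k) \<le> lo k" "filterlim lo at_bot sequentially"
    and hi: "b \<le> hi 0" "\<And>k. hi k \<le> hi (Suc k)" "filterlim hi at_top sequentially"
    and w0_pos: "\<And>i. i \<in> idx a p K0 \<Longrightarrow> 0 < w0 i"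
    and w0_per: "w0 (1 - int p) = w0 (int (Nk a K0) - int p)"
    and dual: "\<And>K i. K \<in> Kset g a b p K0 kmax \<Longrightarrow> i \<in> idx a p K \<Longrightarrow>
        Bstar (window a p lo hi K i) \<in> borel_measurable (lebesgue_on {a..b}) \<and>
        integrable (lebesgue_on {a..b}) (\<lambda>t. (Bstar (window a p lo hi K i) t)\<^sup>2) \<and>
        (\<forall>t. t \<notin> {tk a p lo hi K (i - 1) .. tk a p lo hi K (i + int p)} \<longrightarrow> Bstar (window a p lo hi K i) t = 0) \<and>
        (\<forall>j\<in>idx a p K. (LINT t|lebesgue_on {a..b}. Bstar (window a p lo hi K i) t * bspl (tk a p lo hi K) j p t)
            = (if i = j then 1 else 0))"
    and Kb: "Kb \<in> Kset g a b p K0 kmax"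
    and Kc: "Kc \<in> Kset g a b p K0 kmax"
    and ref: "refines g Kc Kb"
    and v: "L2_Gamma g a b v"
  shows "\<exists>c :: int \<Rightarrow> real. \<forall>y\<in>\<Gamma>.
     Jop cl g a b p lo hi K0 w0 Bstar Kc v y - Jop cl g a b p lo hi K0 w0 Bstar Kb v y
     = (\<Sum>i\<in>{i \<in> Iset cl a p Kc.
              closure {x \<in> \<Gamma>. Rbar cl g a b p lo hi K0 w0 Kc i x \<noteq> 0} \<inter> Ntilde cl g a b Kc Kb \<noteq> {}}.
          c i * Rbar cl g a b p lo hi K0 w0 Kc i y)"
proof -
  have M: "mainctx \<Omega> \<Gamma> cl g a b p K0 Kb Kc kmax lo hi w0 Bstar"
    unfolding mainctx_def using geom K0 p lo(1,2) hi(1,2) w0_pos dual Kb Kc ref by blast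
  show ?thesis by (rule mainctx.main_ctx[OF M])
qed

end
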